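(* For every integer $n \geq 4$, \[ \overline{\theta}(K_n) \geq \max_{x \in \mathbb{Z},\ 1\leq x \leq n/2}\frac{\binom{n}{2} - 2\binom{x}{2}-3}{3n-2x-7}. \] Moreover, for every integer $n\geq 12$, \[ \overline{\theta}(K_n) \geq \left\lceil \frac{3-\sqrt{7}}{2}\, n +0.342\right\rceil \geq \left\lceil\frac{n}{5.646} + 0.342\right\rceil. \]
   Context: The geometric thickness $\overline{\theta}(G)$ of a graph $G$ is the smallest integer $k$ such that there is an injective placement of the vertices of $G$ at points of the plane, with each edge drawn as the straight line segment between the points of its endpoints and containing no other vertex point, together with an assignment of each edge to one of $k$ layers, such that no two edges assigned to the same layer cross (i.e., two edges in the same layer meet at most in a common endpoint). $K_n$ denotes the complete graph on $n$ vertices. *)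

theory Defs
  imports "HOL-Analysis.Analysis"
begin

definition geometric_drawing :: "'a set \<Rightarrow> 'a set set \<Rightarrow> nat \<Rightarrow> bool" where
  "geometric_drawing V E k \<longleftrightarrow>
     (\<exists>(p :: 'a \<Rightarrow> real^2) (c :: 'a set \<Rightarrow> nat).
        inj_on p V \<and>
        (\<forall>a b v. {a, b} \<in> E \<longrightarrow> v \<in> V \<longrightarrow> v \<noteq> a \<longrightarrow> v \<noteq> b \<longrightarrow>
           p v \<notin> closed_segment (p a) (p b)) \<and>
        (\<forall>e\<in>E. c e < k) \<and>
        (\<forall>a b a' b'. {a, b} \<in> E \<longrightarrow> {a', b'} \<in> E \<longrightarrow> {a, b} \<noteq> {a', b'} \<longrightarrow>
           c {a, b} = c {a', b'} \<longrightarrow>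
           closed_segment (p a) (p b) \<inter> closed_segment (p a') (p b')
             \<subseteq> p ` ({a, b} \<inter> {a', b'})))"

definition geometric_thickness :: "'a set \<Rightarrow> 'a set set \<Rightarrow> nat" where
  "geometric_thickness V E = (LEAST k. geometric_drawing V E k)"

definition complete_graph_edges :: "nat \<Rightarrow> nat set set" where
  "complete_graph_edges n = {{i, j} | i j. i < n \<and> j < n \<and> i \<noteq> j}"

definition thickness_K :: "nat \<Rightarrow> nat" where
  "thickness_K n = geometric_thickness {..<n} (complete_graph_edges n)"

end

theory Submission
  imports Defs "HOL-Library.Sublist"
begin

fun chg :: "'a list \<Rightarrow> nat" where
  "chg [] = 0"
| "chg [x] = 0"
| "chg (x # y # xs) = (if x \<noteq> y then 1 else 0) + chg (y # xs)"

lemma chg_Cons: "chg (x # xs) = (if xs \<noteq> [] \<and> x \<noteq> hd xs then 1 else 0) + chg xs"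
  by (cases xs) auto

lemma chg_append:
  "chg (xs @ ys) = chg xs + chg ys + (if xs \<noteq> [] \<and> ys \<noteq> [] \<and> last xs \<noteq> hd ys then 1 else 0)"
proof (induction xs)
  case Nil then show ?case by simp
next
  case (Cons x xs)
  show ?case
  proof (cases xs)
    case Nil then show ?thesis by (simp add: chg_Cons)
  next
    case (Cons y zs)
    then show ?thesis using Cons.IH by (simp add: chg_Cons)
  qed
qed

lemma chg_le_append: "chg xs + chg ys \<le> chg (xs @ ys)"
  by (simp add: chg_append)

lemma chg_append_le: "chg (xs @ ys) \<le> chg xs + chg ys + 1"
  by (simp add: chg_append)

lemma chg_replicate: "chg (replicate a z) = 0"
proof (induction a)
  case (Suc a) then show ?case by (cases a) auto
qed simp

lemma chg_distinct: "distinct xs \<Longrightarrow> chg xs + 1 \<ge> length xs"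
proof (induction xs)
  case (Cons x xs) then show ?case by (cases xs) (auto simp: chg_Cons)
qed simp

lemma chg_transition:
  assumes "distinct D"
  shows "chg (C @ replicate a z @ A) + length D \<le> chg (C @ D @ A) + 3"
proof -
  have d: "chg D + 1 \<ge> length D" using chg_distinct[OF assms] .
  have 1: "chg (C @ replicate a z @ A) \<le> chg C + chg A + 2"
    using chg_append_le[of C "replicate a z @ A"] chg_append_le[of "replicate a z" A] chg_replicate[of a z]
    by simp
  have 2: "chg C + chg D + chg A \<le> chg (C @ D @ A)"
    using chg_le_append[of C "D @ A"] chg_le_append[of D A] by simp
  show ?thesis
  proof (cases "D = []")
    case True
    have 3: "chg (C @ replicate a z @ A) \<le> chg (C @ A) + 3"
    proof (cases "a = 0")
      case True then show ?thesis by simp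
    next
      case False
      have "chg C + chg A \<le> chg (C @ A)" by (rule chg_le_append)
      then show ?thesis using 1 by simp
    qed
    then show ?thesis using True by simp
  next
    case False
    then show ?thesis using 1 2 d by simp
  qed
qed

lemma chg_transition_top:
  assumes "distinct D"
  shows "chg (C @ replicate a z) + length D \<le> chg (C @ D) + 2"
proof -
  have d: "chg D + 1 \<ge> length D" using chg_distinct[OF assms] .
  have 1: "chg (C @ replicate a z) \<le> chg C + 1"
    using chg_append_le[of C "replicate a z"] chg_replicate[of a z] by simp
  have 2: "chg C + chg D \<le> chg (C @ D)"
    using chg_le_append[of C D] by simp
  show ?thesis
  proof (cases "D = []")
    case True
    then show ?thesis using 1 by simp
  next
    case False
    then show ?thesis using 1 2 d by simp
  qed
qed

lemma chg_pairs:
  "distinct xs \<Longrightarrow> length xs \<le> 1 + chg (map fst xs) + chg (map snd xs)"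
proof (induction xs)
  case (Cons x xs)
  show ?case
  proof (cases xs)
    case Nil then show ?thesis by simp
  next
    case (Cons y ys)
    have "x \<noteq> y" using Cons \<open>distinct (x # xs)\<close> by auto
    then have "fst x \<noteq> fst y \<or> snd x \<noteq> snd y" by (cases x, cases y) auto
    then show ?thesis using Cons \<open>distinct (x # xs)\<close> Cons.IH by (auto simp: chg_Cons)
  qed
qed simp

definition abab_free :: "'a list \<Rightarrow> bool" where
  "abab_free xs \<longleftrightarrow> (\<forall>a b. a \<noteq> b \<longrightarrow> \<not> subseq [a, b, a, b] xs)"

lemma abab_free_subseq: "abab_free ys \<Longrightarrow> subseq xs ys \<Longrightarrow> abab_free xs"
  unfolding abab_free_def using subseq_order.order_trans by blast

lemma chg_remove_block:
  "chg (u @ replicate m a @ v) \<le> chg (u @ v) + 2"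
proof -
  have "chg (u @ replicate m a @ v) \<le> chg u + chg v + 2"
    using chg_append_le[of u "replicate m a @ v"] chg_append_le[of "replicate m a" v] chg_replicate[of m a]
    by simp
  moreover have "chg u + chg v \<le> chg (u @ v)" by (rule chg_le_append)
  ultimately show ?thesis by simp
qed

lemma block_decomp:
  assumes "a \<in> set xs"
  shows "\<exists>u w. xs = u @ a # w \<and> a \<notin> set u"
  using assms by (metis split_list_first)

lemma takeWhile_replicate: "\<exists>m. takeWhile (\<lambda>y. y = a) w = replicate m a"
proof (induction w)
  case (Cons y w) then show ?case by (cases "y = a") (auto intro: exI[of _ "Suc _"])
qed simp

lemma first_occ_decomp:
  "xs \<noteq> [] \<Longrightarrow> \<exists>u a w. xs = u @ a # w \<and> a \<notin> set u \<and> set w \<subseteq> insert a (set u)"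
proof (induction xs rule: rev_induct)
  case (snoc y ys)
  show ?case
  proof (cases "ys = []")
    case True then show ?thesis by (intro exI[of _ "[]"] exI[of _ y]) auto
  next
    case False
    show ?thesis
    proof (cases "y \<in> set ys")
      case True
      obtain u a w where h: "ys = u @ a # w" "a \<notin> set u" "set w \<subseteq> insert a (set u)"
        using snoc.IH False by blast
      have "y \<in> insert a (set u)" using True h by auto
      then show ?thesis using h by (intro exI[of _ u] exI[of _ a] exI[of _ "w @ [y]"]) auto
    next
      case False
      then show ?thesis by (intro exI[of _ ys] exI[of _ y] exI[of _ "[]"]) auto
    qed
  qed
qed simp

lemma ds_bound:
  "abab_free xs \<Longrightarrow> xs \<noteq> [] \<Longrightarrow> chg xs + 2 \<le> 2 * card (set xs)"
proof (induction "card (set xs)" arbitrary: xs rule: less_induct)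
  case less
  obtain u a w where uaw: "xs = u @ a # w" "a \<notin> set u" "set w \<subseteq> insert a (set u)"
    using first_occ_decomp[OF less.prems(2)] by blast
  define v where "v = dropWhile (\<lambda>y. y = a) w"
  obtain m where m: "takeWhile (\<lambda>y. y = a) w = replicate m a" using takeWhile_replicate[of a w] by blast
  have wv: "w = replicate m a @ v" using takeWhile_dropWhile_id[of "\<lambda>y. y = a" w] m v_def by simp
  have av: "a \<notin> set v"
  proof
    assume "a \<in> set v"
    then obtain b v' where bv: "v = b # v'" by (cases v) auto
    have ba: "b \<noteq> a" using bv v_def using hd_dropWhile[of "\<lambda>y. y = a" w] by auto
    have "b \<in> set u" using uaw(3) wv bv ba by auto
    have av': "a \<in> set v'" using \<open>a \<in> set v\<close> bv ba by auto
    have s1: "subseq [b] u" using \<open>b \<in> set u\<close> by (simp add: subseq_singleton_left)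
    have s2: "subseq [a] v'" using av' by (simp add: subseq_singleton_left)
    have s3: "subseq [b, a] (b # v')" using s2 by simp
    have s4: "subseq [b, a] (replicate m a @ b # v')" using s3 by (rule subseq_drop_many)
    have s5: "subseq [a, b, a] (a # replicate m a @ b # v')" using s4 by simp
    have "subseq ([b] @ [a, b, a]) (u @ (a # replicate m a @ b # v'))"
      using list_emb_append_mono[OF s1 s5] .
    then have "subseq [b, a, b, a] xs" using uaw(1) wv bv by simp
    then show False using less.prems(1) ba unfolding abab_free_def by blast
  qed
  have xs2: "xs = u @ replicate (Suc m) a @ v" using uaw(1) wv by simp
  have sub: "subseq (u @ v) xs" unfolding xs2
    by (rule list_emb_append_mono[OF subseq_order.order_refl subseq_drop_many[OF subseq_order.order_refl]])
  have setuv: "set (u @ v) = set xs - {a}" using xs2 uaw(2) av by auto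
  have ainx: "a \<in> set xs" using uaw(1) by simp
  have cardlt: "card (set (u @ v)) < card (set xs)" unfolding setuv
    by (rule card_Diff1_less[OF List.finite_set ainx])
  have cpos: "card (set xs) \<ge> 1" using less.prems(2) by (simp add: Suc_leI card_gt_0_iff)
  show ?case
  proof (cases "u @ v = []")
    case True
    then have "xs = replicate (Suc m) a" using xs2 by simp
    then show ?thesis using chg_replicate[of "Suc m" a] cpos by simp
  next
    case False
    have "chg (u @ v) + 2 \<le> 2 * card (set (u @ v))"
      using less.hyps[OF cardlt _ False] abab_free_subseq[OF less.prems(1) sub] by blast
    moreover have "card (set (u @ v)) = card (set xs) - 1"
      unfolding setuv using ainx by (simp add: card_Diff_singleton)
    moreover have "chg xs \<le> chg (u @ v) + 2" unfolding xs2 by (rule chg_remove_block)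
    ultimately show ?thesis using cpos by linarith
  qed
qed

lemma subseq_map_decomp:
  "subseq (x # xs) (map f ys) \<Longrightarrow> \<exists>us v vs. ys = us @ v # vs \<and> f v = x \<and> subseq xs (map f vs)"
proof (induction ys)
  case (Cons y ys)
  show ?case
  proof (cases "f y = x")
    case True
    then have "subseq xs (map f ys)" using Cons.prems by simp
    then show ?thesis using True by (intro exI[of _ "[]"]) auto
  next
    case False
    then have "subseq (x # xs) (map f ys)" using Cons.prems by simp
    then obtain us v vs where "ys = us @ v # vs" "f v = x" "subseq xs (map f vs)" using Cons.IH by blast
    then show ?thesis by (intro exI[of _ "y # us"]) auto
  qed
qed simp

lemma sorted_key_exists:
  fixes h :: "'a \<Rightarrow> real"
  assumes "finite S" "inj_on h S"
  shows "\<exists>xs. set xs = S \<and> sorted_wrt (\<lambda>a b. h a < h b) xs"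
  using assms
proof (induction "card S" arbitrary: S)
  case 0 then show ?case by (intro exI[of _ "[]"]) auto
next
  case (Suc c)
  then have ne: "S \<noteq> {}" by auto
  have "Min (h ` S) \<in> h ` S" using Suc.prems ne by simp
  then obtain m where m: "m \<in> S" "h m = Min (h ` S)" by auto
  have mle: "\<And>y. y \<in> S \<Longrightarrow> h m \<le> h y" using m Suc.prems by simp
  have "c = card (S - {m})" using Suc.hyps(2) m(1) Suc.prems by simp
  moreover have "inj_on h (S - {m})" using Suc.prems(2) by (rule inj_on_subset) auto
  ultimately obtain xs where xs: "set xs = S - {m}" "sorted_wrt (\<lambda>a b. h a < h b) xs"
    using Suc.hyps(1)[of "S - {m}"] Suc.prems by auto
  have "\<And>y. y \<in> S - {m} \<Longrightarrow> h m < h y"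
  proof -
    fix y assume y: "y \<in> S - {m}"
    then have "h m \<le> h y" using mle by auto
    moreover have "h m \<noteq> h y" using Suc.prems(2) m(1) y by (auto dest: inj_onD)
    ultimately show "h m < h y" by simp
  qed
  then show ?case using xs m(1) by (intro exI[of _ "m # xs"]) auto
qed

lemma sorted_key_unique:
  fixes h :: "'a \<Rightarrow> real"
  assumes "sorted_wrt (\<lambda>a b. h a < h b) xs" "sorted_wrt (\<lambda>a b. h a < h b) ys" "set xs = set ys"
  shows "xs = ys"
  using assms
proof (induction xs arbitrary: ys)
  case Nil then show ?case by simp
next
  case (Cons x xs)
  then obtain y ys' where ys: "ys = y # ys'" by (cases ys) auto
  have "x = y"
  proof (rule ccontr)
    assume "x \<noteq> y"
    then have "y \<in> set xs" "x \<in> set ys'" using Cons.prems(3) ys by auto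
    then have "h x < h y" "h y < h x" using Cons.prems(1,2) ys by auto
    then show False by simp
  qed
  moreover have "x \<notin> set xs" using Cons.prems(1) by auto
  moreover have "y \<notin> set ys'" using Cons.prems(2) ys by auto
  ultimately have "set xs = set ys'" using Cons.prems(3) ys
    by (metis Diff_insert_absorb list.simps(15))
  then have "xs = ys'" using Cons.IH[of ys'] Cons.prems ys by auto
  then show ?case using \<open>x = y\<close> ys by simp
qed

lemma sorted_key_partition:
  fixes h :: "'a \<Rightarrow> real" and lv :: "'a \<Rightarrow> nat"
  assumes "sorted_wrt (\<lambda>a b. h a < h b) xs"
    and "\<And>a. a \<in> set xs \<Longrightarrow> lv a \<le> 2"
    and "\<And>a b. a \<in> set xs \<Longrightarrow> b \<in> set xs \<Longrightarrow> lv a < lv b \<Longrightarrow> h a < h b"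
  shows "xs = filter (\<lambda>e. lv e = 0) xs @ filter (\<lambda>e. lv e = 1) xs @ filter (\<lambda>e. lv e = 2) xs"
proof (rule sorted_key_unique[OF assms(1)])
  show "sorted_wrt (\<lambda>a b. h a < h b)
     (filter (\<lambda>e. lv e = 0) xs @ filter (\<lambda>e. lv e = 1) xs @ filter (\<lambda>e. lv e = 2) xs)"
    using assms(1,3) by (auto simp: sorted_wrt_append intro: sorted_wrt_filter)
  show "set xs = set (filter (\<lambda>e. lv e = 0) xs @ filter (\<lambda>e. lv e = 1) xs @ filter (\<lambda>e. lv e = 2) xs)"
    using assms(2) by force
qed

lemma affine_zero:
  fixes A B s t :: real
  assumes "A + B * s < 0" "A + B * t > 0"
  shows "\<exists>r. ((s < r \<and> r < t) \<or> (t < r \<and> r < s)) \<and> A + B * r = 0"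
proof -
  have B: "B \<noteq> 0" using assms by auto
  define r where "r = - A / B"
  have "A + B * r = 0" using B by (simp add: r_def)
  moreover have "(s < r \<and> r < t) \<or> (t < r \<and> r < s)"
  proof (cases "B > 0")
    case True
    then have "s < r" "r < t" using assms by (auto simp: r_def field_simps)
    then show ?thesis by simp
  next
    case False
    then have "B < 0" using B by simp
    then have "t < r" "r < s" using assms by (auto simp: r_def field_simps)
    then show ?thesis by simp
  qed
  ultimately show ?thesis by blast
qed

locale frame =
  fixes P :: "nat \<Rightarrow> real^2" and n :: nat and u w :: "real^2"
  assumes Xmono: "\<And>i j. i < j \<Longrightarrow> j < n \<Longrightarrow> u \<bullet> P i < u \<bullet> P j"
    and XYinj: "\<And>z z'. u \<bullet> z = u \<bullet> z' \<Longrightarrow> w \<bullet> z = w \<bullet> z' \<Longrightarrow> z = z'"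
    and novtx: "\<And>i j m. i < n \<Longrightarrow> j < n \<Longrightarrow> m < n \<Longrightarrow> m \<noteq> i \<Longrightarrow> m \<noteq> j \<Longrightarrow>
                   P m \<notin> closed_segment (P i) (P j)"
begin

definition X :: "nat \<Rightarrow> real" where "X k = u \<bullet> P k"
definition Y :: "nat \<Rightarrow> real" where "Y k = w \<bullet> P k"

definition lam :: "nat \<times> nat \<Rightarrow> real \<Rightarrow> real" where
  "lam e t = (t - X (fst e)) / (X (snd e) - X (fst e))"

definition pt :: "nat \<times> nat \<Rightarrow> real \<Rightarrow> real^2" where
  "pt e t = P (fst e) + lam e t *\<^sub>R (P (snd e) - P (fst e))"

definition ht :: "nat \<times> nat \<Rightarrow> real \<Rightarrow> real" where
  "ht e t = Y (fst e) + lam e t * (Y (snd e) - Y (fst e))"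

definition edge :: "nat \<times> nat \<Rightarrow> bool" where
  "edge e \<longleftrightarrow> fst e < snd e \<and> snd e < n"

lemma X_less: "i < j \<Longrightarrow> j < n \<Longrightarrow> X i < X j"
  using Xmono by (simp add: X_def)

lemma X_le: "i \<le> j \<Longrightarrow> j < n \<Longrightarrow> X i \<le> X j"
  using X_less by (cases "i = j") (auto simp: less_imp_le)

lemma X_less_iff: "i < n \<Longrightarrow> j < n \<Longrightarrow> X i < X j \<longleftrightarrow> i < j"
  using X_less by (metis linorder_neqE_nat order_less_asym order_less_irrefl)

lemma X_inj: "i < n \<Longrightarrow> j < n \<Longrightarrow> X i = X j \<Longrightarrow> i = j"
  using X_less by (metis linorder_neqE_nat order_less_irrefl)

lemma edge_X: "edge e \<Longrightarrow> X (fst e) < X (snd e)"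
  by (auto simp: edge_def X_less)

lemma u_pt: "edge e \<Longrightarrow> u \<bullet> pt e t = t"
proof -
  assume e: "edge e"
  then have d: "X (snd e) - X (fst e) \<noteq> 0" using edge_X by fastforce
  have "u \<bullet> pt e t = X (fst e) + lam e t * (X (snd e) - X (fst e))"
    by (simp add: pt_def X_def inner_add_right inner_diff_right)
  also have "\<dots> = t" using d by (simp add: lam_def field_simps)
  finally show ?thesis .
qed

lemma w_pt: "w \<bullet> pt e t = ht e t"
  by (simp add: pt_def ht_def Y_def inner_add_right inner_diff_right)

lemma pt_in_seg:
  assumes "edge e" "X (fst e) \<le> t" "t \<le> X (snd e)"
  shows "pt e t \<in> closed_segment (P (fst e)) (P (snd e))"
proof -
  have d: "X (snd e) - X (fst e) > 0" using edge_X[OF assms(1)] by simp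
  have "0 \<le> lam e t" "lam e t \<le> 1" using assms d by (auto simp: lam_def field_simps)
  moreover have "pt e t = (1 - lam e t) *\<^sub>R P (fst e) + lam e t *\<^sub>R P (snd e)"
    by (simp add: pt_def algebra_simps)
  ultimately show ?thesis unfolding in_segment by blast
qed

lemma pt_unique: "edge e \<Longrightarrow> u \<bullet> z = t \<Longrightarrow> w \<bullet> z = ht e t \<Longrightarrow> z = pt e t"
  using XYinj u_pt w_pt by metis

lemma ht_fst: "edge e \<Longrightarrow> ht e (X (fst e)) = Y (fst e)"
  by (simp add: ht_def lam_def)

lemma ht_snd: "edge e \<Longrightarrow> ht e (X (snd e)) = Y (snd e)"
  using edge_X[of e] by (simp add: ht_def lam_def)

lemma ht_affine: "edge e \<Longrightarrow> \<exists>A B. \<forall>t. ht e t = A + B * t"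
proof -
  assume "edge e"
  then have d: "X (snd e) - X (fst e) \<noteq> 0" using edge_X by fastforce
  define B where "B = (Y (snd e) - Y (fst e)) / (X (snd e) - X (fst e))"
  have "\<forall>t. ht e t = (Y (fst e) - X (fst e) * B) + B * t"
  proof
    fix t
    have "lam e t * (Y (snd e) - Y (fst e)) = (t - X (fst e)) * B"
      by (simp add: lam_def B_def)
    then show "ht e t = (Y (fst e) - X (fst e) * B) + B * t"
      unfolding ht_def by (simp add: algebra_simps)
  qed
  then show ?thesis by blast
qed

lemma pt_vertex:
  assumes "edge e" "m < n" "ht e (X m) = Y m" "X (fst e) < X m" "X m < X (snd e)"
  shows False
proof -
  have "P m = pt e (X m)" using pt_unique[OF assms(1)] assms(3) by (simp add: X_def Y_def)
  then have "P m \<in> closed_segment (P (fst e)) (P (snd e))"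
    using pt_in_seg[OF assms(1)] assms(4,5) by simp
  moreover have "m \<noteq> fst e" "m \<noteq> snd e" using assms(4,5) by auto
  ultimately show False using novtx[of "fst e" "snd e" m] assms(1,2) by (auto simp: edge_def)
qed

end

locale sweep = frame +
  fixes G :: "(nat \<times> nat) set"
  assumes G_edge: "\<And>e. e \<in> G \<Longrightarrow> edge e"
    and noncross: "\<And>i j i' j'. (i, j) \<in> G \<Longrightarrow> (i', j') \<in> G \<Longrightarrow> (i, j) \<noteq> (i', j') \<Longrightarrow>
        closed_segment (P i) (P j) \<inter> closed_segment (P i') (P j') \<subseteq> P ` ({i, j} \<inter> {i', j'})"
begin

lemma distinct_ht:
  assumes "e \<in> G" "f \<in> G" "e \<noteq> f"
    "X (fst e) < t" "t < X (snd e)" "X (fst f) < t" "t < X (snd f)"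
  shows "ht e t \<noteq> ht f t"
proof
  assume eq: "ht e t = ht f t"
  have ee: "edge e" "edge f" using assms G_edge by auto
  have z: "pt e t = pt f t" using pt_unique[OF ee(2)] u_pt[OF ee(1)] w_pt eq by metis
  have "pt e t \<in> closed_segment (P (fst e)) (P (snd e))" using pt_in_seg[OF ee(1)] assms by simp
  moreover have "pt e t \<in> closed_segment (P (fst f)) (P (snd f))" using z pt_in_seg[OF ee(2)] assms by simp
  ultimately have "pt e t \<in> P ` ({fst e, snd e} \<inter> {fst f, snd f})"
    using noncross[of "fst e" "snd e" "fst f" "snd f"] assms(1,2,3) by auto
  then obtain m where m: "m \<in> {fst e, snd e}" "pt e t = P m" by auto
  then have "u \<bullet> pt e t = X m" by (simp add: X_def)
  then have "t = X m" using u_pt[OF ee(1)] by simp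
  then show False using m(1) assms(4,5) by auto
qed

lemma persist:
  assumes "e \<in> G" "f \<in> G" "e \<noteq> f"
    "X (fst e) \<le> s" "s \<le> X (snd e)" "X (fst f) \<le> s" "s \<le> X (snd f)"
    "X (fst e) \<le> t" "t \<le> X (snd e)" "X (fst f) \<le> t" "t \<le> X (snd f)"
    "ht e t < ht f t"
  shows "ht e s \<le> ht f s"
proof (rule ccontr)
  assume "\<not> ht e s \<le> ht f s"
  then have gt: "ht e s > ht f s" by simp
  have ee: "edge e" "edge f" using assms G_edge by auto
  obtain A B where AB: "\<forall>t. ht e t = A + B * t" using ht_affine[OF ee(1)] by blast
  obtain A' B' where AB': "\<forall>t. ht f t = A' + B' * t" using ht_affine[OF ee(2)] by blast
  have "(A - A') + (B - B') * t < 0" "(A - A') + (B - B') * s > 0"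
    using gt assms(12) AB AB' by (auto simp: algebra_simps)
  then obtain r where r: "(t < r \<and> r < s) \<or> (s < r \<and> r < t)" "(A - A') + (B - B') * r = 0"
    using affine_zero by blast
  have "ht e r = ht f r" using r(2) AB AB' by (auto simp: algebra_simps)
  moreover have "ht e r \<noteq> ht f r"
    using distinct_ht[OF assms(1-3)] r(1) assms(4-11) by auto
  ultimately show False by simp
qed

lemma pinch:
  assumes "e \<in> G" "f \<in> G" "e' \<in> G" "e \<noteq> f" "f \<noteq> e'"
    "a \<in> {fst e, snd e}" "a \<in> {fst e', snd e'}"
    "X (fst f) < X a" "X a < X (snd f)"
    "X (fst e) \<le> t" "t \<le> X (snd e)" "X (fst f) \<le> t" "t \<le> X (snd f)"
    "X (fst e') \<le> t" "t \<le> X (snd e')"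
    "ht e t < ht f t" "ht f t < ht e' t"
  shows False
proof -
  have ee: "edge e" "edge f" "edge e'" using assms G_edge by auto
  have ra: "X (fst e) \<le> X a" "X a \<le> X (snd e)" "X (fst e') \<le> X a" "X a \<le> X (snd e')"
    using assms(6,7) edge_X[OF ee(1)] edge_X[OF ee(3)] by auto
  have hea: "ht e (X a) = Y a" "ht e' (X a) = Y a"
    using assms(6,7) ht_fst[OF ee(1)] ht_snd[OF ee(1)] ht_fst[OF ee(3)] ht_snd[OF ee(3)] by auto
  have "ht e (X a) \<le> ht f (X a)"
    using persist[OF assms(1,2,4)] ra assms(8-13,16) by auto
  moreover have "ht f (X a) \<le> ht e' (X a)"
    using persist[OF assms(2,3,5)] ra assms(8-9,12-15,17) by auto
  ultimately have "ht f (X a) = Y a" using hea by simp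
  moreover have "a < n" using assms(6) ee(1) by (auto simp: edge_def)
  ultimately show False using pt_vertex[OF ee(2)] assms(8,9) by blast
qed

end

lemma sorted_key_distinct:
  fixes h :: "'a \<Rightarrow> real"
  shows "sorted_wrt (\<lambda>a b. h a < h b) xs \<Longrightarrow> distinct xs"
  by (induction xs) auto

context sweep begin

definition tau :: "nat \<Rightarrow> real" where "tau g = (X g + X (Suc g)) / 2"
definition S :: "nat \<Rightarrow> (nat \<times> nat) set" where "S g = {e \<in> G. fst e \<le> g \<and> g < snd e}"
definition Lst :: "nat \<Rightarrow> (nat \<times> nat) list" where
  "Lst g = (SOME xs. set xs = S g \<and> sorted_wrt (\<lambda>a b. ht a (tau g) < ht b (tau g)) xs)"

lemma finite_G: "finite G"
proof -
  have "G \<subseteq> {..<n} \<times> {..<n}" using G_edge by (force simp: edge_def)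
  then show ?thesis by (rule finite_subset) auto
qed

lemma S_range:
  assumes "Suc g < n" "e \<in> S g"
  shows "X (fst e) < tau g" "tau g < X (snd e)"
proof -
  have e: "edge e" "fst e \<le> g" "g < snd e" using assms G_edge by (auto simp: S_def)
  have "X g < X (Suc g)" using assms(1) X_less by simp
  moreover have "X (fst e) \<le> X g" using e assms(1) X_le by simp
  moreover have "X (Suc g) \<le> X (snd e)" using e X_le by (simp add: edge_def)
  ultimately show "X (fst e) < tau g" "tau g < X (snd e)" by (auto simp: tau_def)
qed

lemma Lst_props:
  assumes "Suc g < n"
  shows "set (Lst g) = S g" "sorted_wrt (\<lambda>a b. ht a (tau g) < ht b (tau g)) (Lst g)"
proof -
  have fin: "finite (S g)" using finite_G by (simp add: S_def)
  have inj: "inj_on (\<lambda>a. ht a (tau g)) (S g)"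
  proof (rule inj_onI)
    fix a b assume ab: "a \<in> S g" "b \<in> S g" "ht a (tau g) = ht b (tau g)"
    show "a = b"
    proof (rule ccontr)
      assume "a \<noteq> b"
      then show False using distinct_ht[of a b "tau g"] ab S_range[OF assms] by (auto simp: S_def)
    qed
  qed
  have "\<exists>xs. set xs = S g \<and> sorted_wrt (\<lambda>a b. ht a (tau g) < ht b (tau g)) xs"
    by (rule sorted_key_exists[OF fin inj])
  then have "set (Lst g) = S g \<and> sorted_wrt (\<lambda>a b. ht a (tau g) < ht b (tau g)) (Lst g)"
    unfolding Lst_def by (rule someI_ex)
  then show "set (Lst g) = S g" "sorted_wrt (\<lambda>a b. ht a (tau g) < ht b (tau g)) (Lst g)" by auto
qed

lemma Lst_distinct: "Suc g < n \<Longrightarrow> distinct (Lst g)"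
  by (rule sorted_key_distinct[OF Lst_props(2)])

lemma Lst_length: "Suc g < n \<Longrightarrow> length (Lst g) = card (S g)"
  using Lst_props(1) Lst_distinct distinct_card by metis

lemma vert_order:
  assumes "a \<in> G" "b \<in> G" "a \<noteq> b"
    "X (fst a) \<le> s" "s \<le> X (snd a)" "X (fst b) \<le> s" "s \<le> X (snd b)"
    "X (fst a) < t" "t < X (snd a)" "X (fst b) < t" "t < X (snd b)"
    "ht a s < ht b s"
  shows "ht a t < ht b t"
proof (rule ccontr)
  assume "\<not> ht a t < ht b t"
  moreover have "ht a t \<noteq> ht b t" using distinct_ht[OF assms(1-3)] assms(8-11) by auto
  ultimately have "ht b t < ht a t" by simp
  then have "ht b s \<le> ht a s"
    by (intro persist[of b a s t]) (use assms in \<open>auto simp: less_imp_le\<close>)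
  then show False using assms(12) by simp
qed

definition vk :: "nat \<Rightarrow> nat \<times> nat \<Rightarrow> real" where "vk k e = ht e (X k)"

definition lv0 :: "nat \<Rightarrow> nat \<times> nat \<Rightarrow> nat" where
  "lv0 k e = (if snd e = k then 1 else if vk k e < Y k then 0 else 2)"
definition lv1 :: "nat \<Rightarrow> nat \<times> nat \<Rightarrow> nat" where
  "lv1 k e = (if fst e = k then 1 else if vk k e < Y k then 0 else 2)"

lemma pass_ne:
  assumes "e \<in> G" "fst e < k" "k < snd e"
  shows "vk k e \<noteq> Y k"
proof
  assume "vk k e = Y k"
  moreover have "edge e" using assms G_edge by auto
  moreover have "k < n" using assms \<open>edge e\<close> by (auto simp: edge_def)
  moreover have "X (fst e) < X k" "X k < X (snd e)" using assms \<open>edge e\<close> X_less by (auto simp: edge_def)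
  ultimately show False using pt_vertex[of e k] by (auto simp: vk_def)
qed

lemma pass_distinct:
  assumes "a \<in> G" "b \<in> G" "a \<noteq> b" "fst a < k" "k < snd a" "fst b < k" "k < snd b"
  shows "vk k a \<noteq> vk k b"
proof -
  have "edge a" "edge b" using assms G_edge by auto
  then show ?thesis unfolding vk_def using distinct_ht[OF assms(1-3)] assms X_less
    by (auto simp: edge_def)
qed

lemma lv0_order:
  assumes k: "0 < k" "Suc k < n" and ab: "a \<in> S (k - 1)" "b \<in> S (k - 1)" "lv0 k a < lv0 k b"
  shows "ht a (tau (k - 1)) < ht b (tau (k - 1))"
proof -
  have g: "Suc (k - 1) < n" using k by simp
  have ea: "a \<in> G" "fst a \<le> k - 1" "k - 1 < snd a" and eb: "b \<in> G" "fst b \<le> k - 1" "k - 1 < snd b"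
    using ab by (auto simp: S_def)
  have edg: "edge a" "edge b" using ea eb G_edge by auto
  have ne: "a \<noteq> b" using ab(3) by auto
  have lt: "vk k a < vk k b"
  proof -
    have va: "snd a = k \<Longrightarrow> vk k a = Y k" "snd b = k \<Longrightarrow> vk k b = Y k"
      using ht_snd[OF edg(1)] ht_snd[OF edg(2)] by (auto simp: vk_def)
    have pa: "snd a \<noteq> k \<Longrightarrow> vk k a \<noteq> Y k" using pass_ne[of a k] ea k by auto
    have pb: "snd b \<noteq> k \<Longrightarrow> vk k b \<noteq> Y k" using pass_ne[of b k] eb k by auto
    show ?thesis using ab(3) va pa pb by (auto simp: lv0_def split: if_splits)
  qed
  show ?thesis
    apply (rule vert_order[OF ea(1) eb(1) ne, of "X k"])
    using lt S_range[OF g ab(1)] S_range[OF g ab(2)] ea eb edg k X_le[of _ k] X_le[of k]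
    by (auto simp: vk_def edge_def)
qed

lemma lv1_order:
  assumes k: "Suc k < n" and ab: "a \<in> S k" "b \<in> S k" "lv1 k a < lv1 k b"
  shows "ht a (tau k) < ht b (tau k)"
proof -
  have ea: "a \<in> G" "fst a \<le> k" "k < snd a" and eb: "b \<in> G" "fst b \<le> k" "k < snd b"
    using ab by (auto simp: S_def)
  have edg: "edge a" "edge b" using ea eb G_edge by auto
  have ne: "a \<noteq> b" using ab(3) by auto
  have lt: "vk k a < vk k b"
  proof -
    have va: "fst a = k \<Longrightarrow> vk k a = Y k" "fst b = k \<Longrightarrow> vk k b = Y k"
      using ht_fst[OF edg(1)] ht_fst[OF edg(2)] by (auto simp: vk_def)
    have pa: "fst a \<noteq> k \<Longrightarrow> vk k a \<noteq> Y k" using pass_ne[of a k] ea k by auto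
    have pb: "fst b \<noteq> k \<Longrightarrow> vk k b \<noteq> Y k" using pass_ne[of b k] eb k by auto
    show ?thesis using ab(3) va pa pb by (auto simp: lv1_def split: if_splits)
  qed
  show ?thesis
    apply (rule vert_order[OF ea(1) eb(1) ne, of "X k"])
    using lt S_range[OF k ab(1)] S_range[OF k ab(2)] ea eb edg k X_le[of _ k] X_le[of k]
    by (auto simp: vk_def edge_def)
qed

end

context sweep begin

lemma pass_sorted:
  assumes "a \<in> G" "b \<in> G" "fst a < k" "k < snd a" "fst b < k" "k < snd b"
    "X (fst a) < t" "t < X (snd a)" "X (fst b) < t" "t < X (snd b)"
    "ht a t < ht b t"
  shows "vk k a < vk k b"
proof -
  have ne: "a \<noteq> b" using assms(11) by auto
  have edg: "edge a" "edge b" using assms G_edge by auto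
  have kn: "k < n" using assms(4) edg(1) by (auto simp: edge_def)
  have xs: "X (fst a) < X k" "X k < X (snd a)" "X (fst b) < X k" "X k < X (snd b)"
    using X_less assms(3-6) edg kn by (auto simp: edge_def)
  have "vk k a \<noteq> vk k b" using pass_distinct[OF assms(1,2) ne assms(3-6)] .
  moreover have "\<not> vk k b < vk k a"
  proof
    assume "vk k b < vk k a"
    then have "ht b t < ht a t"
      using vert_order[of b a "X k" t] assms ne xs by (auto simp: vk_def less_imp_le)
    then show False using assms(11) by simp
  qed
  ultimately show ?thesis by simp
qed

lemma decomp:
  assumes k: "0 < k" "Suc k < n"
  shows "\<exists>(B::(nat\<times>nat) list) (A::(nat\<times>nat) list) (I::(nat\<times>nat) list) (Ot::(nat\<times>nat) list). map snd (Lst (k - 1)) = map snd B @ replicate (length I) k @ map snd A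
      \<and> map snd (Lst k) = map snd B @ map snd Ot @ map snd A
      \<and> distinct (map snd Ot) \<and> length Ot = card {e \<in> G. fst e = k}
      \<and> ((\<forall>e\<in>G. fst e < k \<longrightarrow> k < snd e \<longrightarrow> vk k e < Y k) \<longrightarrow> A = [])"
proof -
  have g0: "Suc (k - 1) < n" using k by simp
  define L0 where "L0 = Lst (k - 1)"
  define L1 where "L1 = Lst k"
  have sL0: "set L0 = S (k - 1)" "sorted_wrt (\<lambda>a b. ht a (tau (k - 1)) < ht b (tau (k - 1))) L0"
    using Lst_props[OF g0] by (auto simp: L0_def)
  have sL1: "set L1 = S k" "sorted_wrt (\<lambda>a b. ht a (tau k) < ht b (tau k)) L1"
    using Lst_props[OF k(2)] by (auto simp: L1_def)
  have dL1: "distinct L1" using Lst_distinct[OF k(2)] by (simp add: L1_def)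
  have p0: "L0 = filter (\<lambda>e. lv0 k e = 0) L0 @ filter (\<lambda>e. lv0 k e = 1) L0 @ filter (\<lambda>e. lv0 k e = 2) L0"
    apply (rule sorted_key_partition[OF sL0(2)])
     apply (simp add: lv0_def)
    using lv0_order[OF k] sL0(1) by blast
  have p1: "L1 = filter (\<lambda>e. lv1 k e = 0) L1 @ filter (\<lambda>e. lv1 k e = 1) L1 @ filter (\<lambda>e. lv1 k e = 2) L1"
    apply (rule sorted_key_partition[OF sL1(2)])
     apply (simp add: lv1_def)
    using lv1_order[OF k(2)] sL1(1) by blast
  have srt0: "sorted_wrt (\<lambda>a b. vk k a < vk k b) (filter P' L0)"
    if "\<And>e. P' e \<Longrightarrow> e \<in> S (k - 1) \<Longrightarrow> snd e \<noteq> k" for P'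
  proof -
    have "sorted_wrt (\<lambda>a b. ht a (tau (k - 1)) < ht b (tau (k - 1))) (filter P' L0)"
      by (rule sorted_wrt_filter[OF sL0(2)])
    then show ?thesis
    proof (rule sorted_wrt_mono_rel[rotated])
      fix a b assume ab: "a \<in> set (filter P' L0)" "b \<in> set (filter P' L0)"
        "ht a (tau (k - 1)) < ht b (tau (k - 1))"
      have "a \<in> S (k - 1)" "b \<in> S (k - 1)" "snd a \<noteq> k" "snd b \<noteq> k" using ab that sL0(1) by auto
      then show "vk k a < vk k b"
        using pass_sorted[of a b k "tau (k - 1)"] S_range[OF g0] ab(3) k by (auto simp: S_def)
    qed
  qed
  have srt1: "sorted_wrt (\<lambda>a b. vk k a < vk k b) (filter P' L1)"
    if "\<And>e. P' e \<Longrightarrow> e \<in> S k \<Longrightarrow> fst e \<noteq> k" for P'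
  proof -
    have "sorted_wrt (\<lambda>a b. ht a (tau k) < ht b (tau k)) (filter P' L1)"
      by (rule sorted_wrt_filter[OF sL1(2)])
    then show ?thesis
    proof (rule sorted_wrt_mono_rel[rotated])
      fix a b assume ab: "a \<in> set (filter P' L1)" "b \<in> set (filter P' L1)"
        "ht a (tau k) < ht b (tau k)"
      have "a \<in> S k" "b \<in> S k" "fst a \<noteq> k" "fst b \<noteq> k" using ab that sL1(1) by auto
      then show "vk k a < vk k b"
        using pass_sorted[of a b k "tau k"] S_range[OF k(2)] ab(3) k by (auto simp: S_def)
    qed
  qed
  define B where "B = filter (\<lambda>e. lv0 k e = 0) L0"
  define A where "A = filter (\<lambda>e. lv0 k e = 2) L0"
  define I where "I = filter (\<lambda>e. lv0 k e = 1) L0"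
  define Ot where "Ot = filter (\<lambda>e. lv1 k e = 1) L1"
  have B1: "filter (\<lambda>e. lv1 k e = 0) L1 = B"
  proof (rule sorted_key_unique[of "vk k"])
    show "sorted_wrt (\<lambda>a b. vk k a < vk k b) (filter (\<lambda>e. lv1 k e = 0) L1)"
      by (rule srt1) (auto simp: lv1_def split: if_splits)
    show "sorted_wrt (\<lambda>a b. vk k a < vk k b) B"
      unfolding B_def by (rule srt0) (auto simp: lv0_def split: if_splits)
    show "set (filter (\<lambda>e. lv1 k e = 0) L1) = set B"
      unfolding B_def using sL0(1) sL1(1) k by (auto simp: S_def lv0_def lv1_def split: if_splits)
  qed
  have A1: "filter (\<lambda>e. lv1 k e = 2) L1 = A"
  proof (rule sorted_key_unique[of "vk k"])
    show "sorted_wrt (\<lambda>a b. vk k a < vk k b) (filter (\<lambda>e. lv1 k e = 2) L1)"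
      by (rule srt1) (auto simp: lv1_def split: if_splits)
    show "sorted_wrt (\<lambda>a b. vk k a < vk k b) A"
      unfolding A_def by (rule srt0) (auto simp: lv0_def split: if_splits)
    show "set (filter (\<lambda>e. lv1 k e = 2) L1) = set A"
      unfolding A_def using sL0(1) sL1(1) k by (auto simp: S_def lv0_def lv1_def split: if_splits)
  qed
  have I: "map snd I = replicate (length I) k"
  proof -
    have "\<forall>e\<in>set I. snd e = k" by (auto simp: I_def lv0_def split: if_splits)
    then show ?thesis by (induction I) auto
  qed
  have e0: "map snd (Lst (k - 1)) = map snd B @ replicate (length I) k @ map snd A"
    using p0 I unfolding L0_def[symmetric] B_def A_def I_def by (metis map_append)
  have e1: "map snd (Lst k) = map snd B @ map snd Ot @ map snd A"
    using p1 B1 A1 unfolding L1_def[symmetric] Ot_def by (metis map_append)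
  have setO: "set Ot = {e \<in> G. fst e = k}"
    using sL1(1) G_edge by (auto simp: Ot_def lv1_def S_def edge_def split: if_splits)
  have dO: "distinct Ot" using dL1 by (simp add: Ot_def)
  have dmO: "distinct (map snd Ot)"
  proof -
    have "inj_on snd (set Ot)"
      by (rule inj_onI) (auto simp: setO prod_eq_iff)
    then show ?thesis using dO by (simp add: distinct_map)
  qed
  have lO: "length Ot = card {e \<in> G. fst e = k}" using distinct_card[OF dO] setO by simp
  have top: "(\<forall>e\<in>G. fst e < k \<longrightarrow> k < snd e \<longrightarrow> vk k e < Y k) \<longrightarrow> A = []"
  proof
    assume h: "\<forall>e\<in>G. fst e < k \<longrightarrow> k < snd e \<longrightarrow> vk k e < Y k"
    have "set A = {}" using h sL0(1) k by (auto simp: A_def S_def lv0_def split: if_splits)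
    then show "A = []" by simp
  qed
  show ?thesis using e0 e1 dmO lO top by blast
qed

definition r :: "nat \<Rightarrow> nat" where "r g = chg (map snd (Lst g))"
definition outd :: "nat \<Rightarrow> nat" where "outd k = card {e \<in> G. fst e = k}"

lemma transition:
  assumes "0 < k" "Suc k < n"
  shows "r (k - 1) + outd k \<le> r k + 3"
proof -
  obtain B A I Ot :: "(nat\<times>nat) list" where h: "map snd (Lst (k - 1)) = map snd B @ replicate (length I) k @ map snd A"
      "map snd (Lst k) = map snd B @ map snd Ot @ map snd A"
      "distinct (map snd Ot)" "length Ot = card {e \<in> G. fst e = k}"
    using decomp[OF assms] by blast
  show ?thesis
    using chg_transition[OF h(3), of "map snd B" "length I" k "map snd A"] h
    by (simp add: r_def outd_def)
qed

lemma transition_top: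
  assumes "0 < k" "Suc k < n" "\<forall>e\<in>G. fst e < k \<longrightarrow> k < snd e \<longrightarrow> vk k e < Y k"
  shows "r (k - 1) + outd k \<le> r k + 2"
proof -
  obtain B A I Ot :: "(nat\<times>nat) list" where h: "map snd (Lst (k - 1)) = map snd B @ replicate (length I) k @ map snd A"
      "map snd (Lst k) = map snd B @ map snd Ot @ map snd A"
      "distinct (map snd Ot)" "length Ot = card {e \<in> G. fst e = k}"
      "A = []"
    using decomp[OF assms(1,2)] assms(3) by blast
  show ?thesis
    using chg_transition_top[OF h(3), of "map snd B" "length I" k] h
    by (simp add: r_def outd_def)
qed

end

lemma sorted_wrt_mid:
  "sorted_wrt R (us @ e # vs) \<Longrightarrow> y \<in> set vs \<Longrightarrow> R e y"
  by (auto simp: sorted_wrt_append)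

lemma four_decomp:
  assumes "subseq [a, b, c, d] (map f L)"
  shows "\<exists>us1 e1 vs1 us2 e2 vs2 us3 e3 vs3 us4 e4 vs4.
     L = us1 @ e1 # vs1 \<and> vs1 = us2 @ e2 # vs2 \<and> vs2 = us3 @ e3 # vs3 \<and> vs3 = us4 @ e4 # vs4
     \<and> f e1 = a \<and> f e2 = b \<and> f e3 = c \<and> f e4 = d"
proof -
  obtain us1 e1 vs1 where 1: "L = us1 @ e1 # vs1" "f e1 = a" "subseq [b, c, d] (map f vs1)"
    using subseq_map_decomp[OF assms] by blast
  obtain us2 e2 vs2 where 2: "vs1 = us2 @ e2 # vs2" "f e2 = b" "subseq [c, d] (map f vs2)"
    using subseq_map_decomp[OF 1(3)] by blast
  obtain us3 e3 vs3 where 3: "vs2 = us3 @ e3 # vs3" "f e3 = c" "subseq [d] (map f vs3)"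
    using subseq_map_decomp[OF 2(3)] by blast
  obtain us4 e4 vs4 where 4: "vs3 = us4 @ e4 # vs4" "f e4 = d"
    using subseq_map_decomp[OF 3(3)] by blast
  show ?thesis using 1 2 3 4 by blast
qed

context sweep begin

lemma ordered4:
  assumes "Suc g < n" "Lst g = us1 @ e1 # vs1" "vs1 = us2 @ e2 # vs2" "vs2 = us3 @ e3 # vs3"
    "vs3 = us4 @ e4 # vs4"
  shows "ht e1 (tau g) < ht e2 (tau g)" "ht e2 (tau g) < ht e3 (tau g)" "ht e3 (tau g) < ht e4 (tau g)"
    "e1 \<in> S g" "e2 \<in> S g" "e3 \<in> S g" "e4 \<in> S g"
proof -
  have s: "sorted_wrt (\<lambda>a b. ht a (tau g) < ht b (tau g)) (Lst g)" using Lst_props(2)[OF assms(1)] .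
  have s1: "sorted_wrt (\<lambda>a b. ht a (tau g) < ht b (tau g)) vs1" using s assms(2) by (simp add: sorted_wrt_append)
  have s2: "sorted_wrt (\<lambda>a b. ht a (tau g) < ht b (tau g)) vs2" using s1 assms(3) by (simp add: sorted_wrt_append)
  show "ht e1 (tau g) < ht e2 (tau g)" using sorted_wrt_mid[OF s[unfolded assms(2)]] assms(3) by simp
  show "ht e2 (tau g) < ht e3 (tau g)" using sorted_wrt_mid[OF s1[unfolded assms(3)]] assms(4) by simp
  show "ht e3 (tau g) < ht e4 (tau g)" using sorted_wrt_mid[OF s2[unfolded assms(4)]] assms(5) by simp
  have "set (Lst g) = S g" using Lst_props(1)[OF assms(1)] .
  then show "e1 \<in> S g" "e2 \<in> S g" "e3 \<in> S g" "e4 \<in> S g" using assms(2-5) by auto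
qed

lemma abab_fst:
  assumes g: "Suc g < n"
  shows "abab_free (map fst (Lst g))"
  unfolding abab_free_def
proof (intro allI impI notI)
  fix a b assume ab: "a \<noteq> b" "subseq [a, b, a, b] (map fst (Lst g))"
  obtain us1 e1 vs1 us2 e2 vs2 us3 e3 vs3 us4 e4 vs4 where
    d: "Lst g = us1 @ e1 # vs1" "vs1 = us2 @ e2 # vs2" "vs2 = us3 @ e3 # vs3" "vs3 = us4 @ e4 # vs4"
       "fst e1 = a" "fst e2 = b" "fst e3 = a" "fst e4 = b"
    using four_decomp[OF ab(2)] by blast
  note o = ordered4[OF g d(1-4)]
  have inS: "\<And>e. e \<in> S g \<Longrightarrow> e \<in> G \<and> fst e \<le> g \<and> g < snd e" by (auto simp: S_def)
  have rg: "\<And>e. e \<in> S g \<Longrightarrow> X (fst e) \<le> tau g \<and> tau g \<le> X (snd e)"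
    using S_range[OF g] by (auto simp: less_imp_le)
  have Xg: "\<And>e. e \<in> S g \<Longrightarrow> X g < X (snd e)" using inS X_less G_edge by (auto simp: edge_def)
  have Xf: "\<And>e c. e \<in> S g \<Longrightarrow> c \<le> g \<Longrightarrow> X c \<le> X g" using X_le g by auto
  show False
  proof (cases "a < b")
    case True
    have "X a < X b" using True inS[OF o(5)] d g X_less by auto
    moreover have "X b < X (snd e3)" using Xg[OF o(6)] Xf[OF o(5), of b] inS[OF o(5)] d by force
    ultimately show False
      apply (intro pinch[of e2 e3 e4 b "tau g"])
      using o inS[OF o(4)] inS[OF o(5)] inS[OF o(6)] inS[OF o(7)] rg[OF o(4)] rg[OF o(5)] rg[OF o(6)] rg[OF o(7)] d by auto
  next
    case False
    then have "b < a" using ab(1) by simp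
    then have "X b < X a" using inS[OF o(4)] d g X_less by auto
    moreover have "X a < X (snd e2)" using Xg[OF o(5)] Xf[OF o(4), of a] inS[OF o(4)] d by force
    ultimately show False
      apply (intro pinch[of e1 e2 e3 a "tau g"])
      using o inS[OF o(4)] inS[OF o(5)] inS[OF o(6)] inS[OF o(7)] rg[OF o(4)] rg[OF o(5)] rg[OF o(6)] rg[OF o(7)] d by auto
  qed
qed

lemma abab_snd:
  assumes g: "Suc g < n"
  shows "abab_free (map snd (Lst g))"
  unfolding abab_free_def
proof (intro allI impI notI)
  fix a b assume ab: "a \<noteq> b" "subseq [a, b, a, b] (map snd (Lst g))"
  obtain us1 e1 vs1 us2 e2 vs2 us3 e3 vs3 us4 e4 vs4 where
    d: "Lst g = us1 @ e1 # vs1" "vs1 = us2 @ e2 # vs2" "vs2 = us3 @ e3 # vs3" "vs3 = us4 @ e4 # vs4"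
       "snd e1 = a" "snd e2 = b" "snd e3 = a" "snd e4 = b"
    using four_decomp[OF ab(2)] by blast
  note o = ordered4[OF g d(1-4)]
  have inS: "\<And>e. e \<in> S g \<Longrightarrow> e \<in> G \<and> fst e \<le> g \<and> g < snd e" by (auto simp: S_def)
  have rg: "\<And>e. e \<in> S g \<Longrightarrow> X (fst e) \<le> tau g \<and> tau g \<le> X (snd e)"
    using S_range[OF g] by (auto simp: less_imp_le)
  have ed: "\<And>e. e \<in> S g \<Longrightarrow> snd e < n" using inS G_edge by (auto simp: edge_def)
  have Xf: "\<And>e c. e \<in> S g \<Longrightarrow> g < c \<Longrightarrow> c < n \<Longrightarrow> X (fst e) < X c"
    using inS X_less by (meson le_less_trans)
  show False
  proof (cases "a < b")
    case True
    have "X a < X b" using True ed[OF o(5)] d X_less by auto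
    moreover have "X (fst e2) < X a" using Xf[OF o(5), of a] inS[OF o(4)] ed[OF o(4)] d by auto
    ultimately show False
      apply (intro pinch[of e1 e2 e3 a "tau g"])
      using o inS[OF o(4)] inS[OF o(5)] inS[OF o(6)] inS[OF o(7)] rg[OF o(4)] rg[OF o(5)] rg[OF o(6)] rg[OF o(7)] d by auto
  next
    case False
    then have "b < a" using ab(1) by simp
    then have "X b < X a" using ed[OF o(4)] d X_less by auto
    moreover have "X (fst e3) < X b" using Xf[OF o(6), of b] inS[OF o(5)] ed[OF o(5)] d by auto
    ultimately show False
      apply (intro pinch[of e2 e3 e4 b "tau g"])
      using o inS[OF o(4)] inS[OF o(5)] inS[OF o(6)] inS[OF o(7)] rg[OF o(4)] rg[OF o(5)] rg[OF o(6)] rg[OF o(7)] d by auto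
  qed
qed

end

context sweep begin

lemma ds_fst:
  assumes "1 \<le> x" "x < n"
  shows "chg (map fst (Lst (x - 1))) + 2 \<le> 2 * x"
proof (cases "Lst (x - 1) = []")
  case True then show ?thesis using assms by simp
next
  case False
  have g: "Suc (x - 1) < n" using assms by simp
  have "set (map fst (Lst (x - 1))) \<subseteq> {..<x}"
    using Lst_props(1)[OF g] assms by (auto simp: S_def)
  then have "card (set (map fst (Lst (x - 1)))) \<le> x"
    by (metis card_lessThan card_mono finite_lessThan)
  moreover have "chg (map fst (Lst (x - 1))) + 2 \<le> 2 * card (set (map fst (Lst (x - 1))))"
    using ds_bound[OF abab_fst[OF g]] False by simp
  ultimately show ?thesis by linarith
qed

lemma ds_snd:
  assumes "1 \<le> x" "x < n"
  shows "chg (map snd (Lst (n - x - 1))) + 2 \<le> 2 * x"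
proof (cases "Lst (n - x - 1) = []")
  case True then show ?thesis using assms by simp
next
  case False
  have g: "Suc (n - x - 1) < n" using assms by simp
  have "set (map snd (Lst (n - x - 1))) \<subseteq> {n - x..<n}"
    using Lst_props(1)[OF g] assms G_edge by (auto simp: S_def edge_def)
  then have "card (set (map snd (Lst (n - x - 1)))) \<le> x"
    by (metis card_atLeastLessThan card_mono finite_atLeastLessThan diff_diff_cancel less_imp_le assms(2))
  moreover have "chg (map snd (Lst (n - x - 1))) + 2 \<le> 2 * card (set (map snd (Lst (n - x - 1))))"
    using ds_bound[OF abab_snd[OF g]] False by simp
  ultimately show ?thesis by linarith
qed

lemma tele:
  assumes x: "1 \<le> x" and top: "\<forall>e\<in>G. fst e < x \<longrightarrow> x < snd e \<longrightarrow> vk x e < Y x"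
  shows "Suc (x + d) < n \<Longrightarrow> (\<Sum>k\<in>{x..x + d}. outd k) + r (x - 1) + 1 \<le> r (x + d) + 3 * (d + 1)"
proof (induction d)
  case 0
  then show ?case using transition_top[of x] x top by simp
next
  case (Suc d)
  have "r (x + d) + outd (Suc (x + d)) \<le> r (Suc (x + d)) + 3"
    using transition[of "Suc (x + d)"] Suc.prems by simp
  moreover have "(\<Sum>k\<in>{x..x + Suc d}. outd k) = (\<Sum>k\<in>{x..x + d}. outd k) + outd (Suc (x + d))"
    by simp
  ultimately show ?case using Suc.IH Suc.prems by simp
qed

lemma NL_card:
  assumes "1 \<le> x" "2 * x + 1 \<le> n"
  shows "card {e \<in> G. x \<le> snd e \<and> fst e < n - x} = card (S (x - 1)) + (\<Sum>k\<in>{x..n - x - 1}. outd k)"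
proof -
  have eq: "{e \<in> G. x \<le> snd e \<and> fst e < n - x} = S (x - 1) \<union> (\<Union>k\<in>{x..n - x - 1}. {e \<in> G. fst e = k})"
    using assms by (auto simp: S_def edge_def dest: G_edge)
  have fin: "finite (S (x - 1))" "\<And>k. finite {e \<in> G. fst e = k}" using finite_G by (auto simp: S_def)
  have disj: "S (x - 1) \<inter> (\<Union>k\<in>{x..n - x - 1}. {e \<in> G. fst e = k}) = {}"
    using assms by (auto simp: S_def)
  have "card (\<Union>k\<in>{x..n - x - 1}. {e \<in> G. fst e = k}) = (\<Sum>k\<in>{x..n - x - 1}. card {e \<in> G. fst e = k})"
    by (rule card_UN_disjoint) (use fin in auto)
  then show ?thesis unfolding eq
    using card_Un_disjoint[OF fin(1) _ disj] fin by (simp add: outd_def)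
qed

lemma main_bound:
  assumes x: "1 \<le> x" "2 * x + 1 \<le> n"
    and top: "\<forall>e\<in>G. fst e < x \<longrightarrow> x < snd e \<longrightarrow> vk x e < Y x"
  shows "int (card {e \<in> G. x \<le> snd e \<and> fst e < n - x}) \<le> 3 * int n - 2 * int x - 4"
proof -
  define d where "d = n - 2 * x - 1"
  have K: "x + d = n - x - 1" "Suc (x + d) < n" using x by (auto simp: d_def)
  have t: "(\<Sum>k\<in>{x..n - x - 1}. outd k) + r (x - 1) + 1 \<le> r (n - x - 1) + 3 * (d + 1)"
    using tele[OF x(1) top K(2)] K(1) by simp
  have g: "Suc (x - 1) < n" using x by simp
  have s: "card (S (x - 1)) \<le> 1 + chg (map fst (Lst (x - 1))) + r (x - 1)"
    using chg_pairs[OF Lst_distinct[OF g]] Lst_length[OF g] by (simp add: r_def)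
  have q: "chg (map fst (Lst (x - 1))) + 2 \<le> 2 * x" using ds_fst x by simp
  have rr: "r (n - x - 1) + 2 \<le> 2 * x" using ds_snd x by (simp add: r_def)
  have "card {e \<in> G. x \<le> snd e \<and> fst e < n - x} = card (S (x - 1)) + (\<Sum>k\<in>{x..n - x - 1}. outd k)"
    by (rule NL_card[OF x(1,2)])
  moreover have "3 * (d + 1) = 3 * n - 6 * x" using x by (simp add: d_def)
  ultimately show ?thesis using t s q rr x by linarith
qed

end

lemma line_shift:
  fixes A B D xm xj t :: real
  assumes "xm \<noteq> xj"
  shows "(A + B * xm + D) + (t - xm) / (xj - xm) * ((A + B * xj) - (A + B * xm + D))
         = (A + B * t) + D * ((xj - t) / (xj - xm))"
proof -
  have "xj - xm \<noteq> 0" using assms by simp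
  then show ?thesis by (simp add: divide_simps) (simp add: algebra_simps)
qed
lemma line_shift2:
  fixes A B D xi xm t :: real
  assumes "xi \<noteq> xm"
  shows "(A + B * xi) + (t - xi) / (xm - xi) * ((A + B * xm + D) - (A + B * xi))
         = (A + B * t) + D * ((t - xi) / (xm - xi))"
proof -
  have "xm - xi \<noteq> 0" using assms by simp
  then show ?thesis by (simp add: divide_simps) (simp add: algebra_simps)
qed

context frame begin

lemma ht_pair: "ht (i, j) t = Y i + (t - X i) / (X j - X i) * (Y j - Y i)"
  by (simp add: ht_def lam_def)

lemma pt_between:
  assumes "edge e" "t1 \<le> t2" "t2 \<le> t3"
  shows "pt e t2 \<in> closed_segment (pt e t1) (pt e t3)"
proof (cases "t1 = t3")
  case True
  then have "t2 = t1" using assms by simp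
  then show ?thesis by simp
next
  case False
  then have d: "t3 - t1 > 0" using assms by simp
  define mu where "mu = (t2 - t1) / (t3 - t1)"
  have mu: "0 \<le> mu" "mu \<le> 1" using assms d by (auto simp: mu_def field_simps)
  have D: "X (snd e) - X (fst e) \<noteq> 0" using edge_X[OF assms(1)] by simp
  have c0: "mu * (t3 - t1) = t2 - t1" using d by (simp add: mu_def)
  have c: "(1 - mu) * t1 + mu * t3 = t2"
  proof -
    have "(1 - mu) * t1 + mu * t3 = t1 + mu * (t3 - t1)" by (simp add: algebra_simps)
    then show ?thesis using c0 by simp
  qed
  have gen: "(Dd::real) \<noteq> 0 \<Longrightarrow> (1 - mu) * ((t1 - aa) / Dd) + mu * ((t3 - aa) / Dd) = ((1 - mu) * t1 + mu * t3 - aa) / Dd" for aa Dd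
    by (simp add: divide_simps) (simp add: algebra_simps)
  have "(1 - mu) * lam e t1 + mu * lam e t3 = ((1 - mu) * t1 + mu * t3 - X (fst e)) / (X (snd e) - X (fst e))"
    unfolding lam_def by (rule gen[OF D])
  then have l: "lam e t2 = (1 - mu) * lam e t1 + mu * lam e t3"
    using c by (simp add: lam_def)
  have "pt e t2 = (1 - mu) *\<^sub>R pt e t1 + mu *\<^sub>R pt e t3"
    unfolding pt_def l by (simp add: algebra_simps)
  then show ?thesis using mu unfolding in_segment by blast
qed

lemma pt_X: "edge e \<Longrightarrow> pt e (X (fst e)) = P (fst e)" "edge e \<Longrightarrow> pt e (X (snd e)) = P (snd e)"
proof -
  assume e: "edge e"
  then have "X (snd e) - X (fst e) \<noteq> 0" using edge_X by fastforce
  then show "pt e (X (fst e)) = P (fst e)" "pt e (X (snd e)) = P (snd e)"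
    by (auto simp: pt_def lam_def)
qed

lemma not_on_line:
  assumes e: "edge e" and m: "m < n" "m \<noteq> fst e" "m \<noteq> snd e"
  shows "Y m \<noteq> ht e (X m)"
proof
  assume h: "Y m = ht e (X m)"
  have pm: "P m = pt e (X m)" using pt_unique[OF e] h by (simp add: X_def Y_def)
  have en: "fst e < n" "snd e < n" using e by (auto simp: edge_def)
  have xe: "X (fst e) < X (snd e)" using edge_X[OF e] .
  have xm: "X m \<noteq> X (fst e)" "X m \<noteq> X (snd e)" using X_inj m en by metis+
  consider "X m < X (fst e)" | "X (fst e) < X m \<and> X m < X (snd e)" | "X (snd e) < X m"
    using xm xe by linarith
  then show False
  proof cases
    case 1
    then have "pt e (X (fst e)) \<in> closed_segment (pt e (X m)) (pt e (X (snd e)))"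
      using pt_between[OF e] xe by simp
    then have "P (fst e) \<in> closed_segment (P m) (P (snd e))" using pt_X[OF e] pm by simp
    then show False using novtx[of m "snd e" "fst e"] m en e by (auto simp: edge_def)
  next
    case 2
    then have "pt e (X m) \<in> closed_segment (pt e (X (fst e))) (pt e (X (snd e)))"
      using pt_between[OF e] by simp
    then have "P m \<in> closed_segment (P (fst e)) (P (snd e))" using pt_X[OF e] pm by simp
    then show False using novtx[of "fst e" "snd e" m] m en by auto
  next
    case 3
    then have "pt e (X (snd e)) \<in> closed_segment (pt e (X (fst e))) (pt e (X m))"
      using pt_between[OF e] xe by simp
    then have "P (snd e) \<in> closed_segment (P (fst e)) (P m)" using pt_X[OF e] pm by simp
    then show False using novtx[of "fst e" m "snd e"] m en e by (auto simp: edge_def)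
  qed
qed

definition supp :: "real \<Rightarrow> nat \<times> nat \<Rightarrow> bool" where
  "supp s e \<longleftrightarrow> edge e \<and> (\<forall>m<n. m \<noteq> fst e \<longrightarrow> m \<noteq> snd e \<longrightarrow> s * (Y m - ht e (X m)) < 0)"

lemma supp_exists:
  assumes g: "Suc g < n" and s: "s = 1 \<or> s = -1"
  shows "\<exists>e. supp s e \<and> fst e \<le> g \<and> g < snd e"
proof -
  define C where "C = {e. fst e \<le> g \<and> g < snd e \<and> snd e < n}"
  define t where "t = (X g + X (Suc g)) / 2"
  have Xg: "X g < X (Suc g)" using g X_less by simp
  have finC: "finite C"
  proof -
    have "C \<subseteq> {..<n} \<times> {..<n}" using g by (auto simp: C_def)
    then show ?thesis by (rule finite_subset) auto
  qed
  have neC: "(g, Suc g) \<in> C" using g by (simp add: C_def)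
  define M where "M = Max ((\<lambda>e. s * ht e t) ` C)"
  have "M \<in> (\<lambda>e. s * ht e t) ` C" unfolding M_def using finC neC by (intro Max_in) auto
  then obtain e where e: "e \<in> C" "s * ht e t = M" by auto
  have emax: "s * ht e' t \<le> s * ht e t" if "e' \<in> C" for e'
  proof -
    have "s * ht e' t \<le> M" unfolding M_def by (rule Max_ge[OF finite_imageI[OF finC]]) (use that in auto)
    then show ?thesis using e(2) by simp
  qed
  have ee: "edge e" using e(1) by (auto simp: C_def edge_def)
  obtain A B where AB: "\<forall>t. ht e t = A + B * t" using ht_affine[OF ee] by blast
  have Yi: "Y (fst e) = A + B * X (fst e)" using ht_fst[OF ee] AB by metis
  have Yj: "Y (snd e) = A + B * X (snd e)" using ht_snd[OF ee] AB by metis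
  have tr: "X (fst e) < t" "t < X (snd e)"
  proof -
    have "X (fst e) \<le> X g" using e(1) g X_le by (auto simp: C_def)
    moreover have "X (Suc g) \<le> X (snd e)" using e(1) X_le by (auto simp: C_def)
    ultimately show "X (fst e) < t" "t < X (snd e)" using Xg by (auto simp: t_def)
  qed
  have "\<forall>m<n. m \<noteq> fst e \<longrightarrow> m \<noteq> snd e \<longrightarrow> s * (Y m - ht e (X m)) < 0"
  proof (intro allI impI)
    fix m assume m: "m < n" "m \<noteq> fst e" "m \<noteq> snd e"
    define D where "D = Y m - ht e (X m)"
    have D0: "D \<noteq> 0" using not_on_line[OF ee m] by (simp add: D_def)
    have Ym: "Y m = A + B * X m + D" using AB by (simp add: D_def)
    show "s * (Y m - ht e (X m)) < 0"
    proof (rule ccontr)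
      assume "\<not> s * (Y m - ht e (X m)) < 0"
      then have sD: "s * D > 0" using D0 s by (auto simp: D_def)
      show False
      proof (cases "m \<le> g")
        case True
        have e'C: "(m, snd e) \<in> C" using True e(1) by (simp add: C_def)
        have "X m \<le> X g" using X_le[of m g] True g by simp
        then have xm: "X m < t" using Xg by (auto simp: t_def)
        have ne: "X m \<noteq> X (snd e)" using xm tr by simp
        have h1: "ht (m, snd e) t = (A + B * t) + D * ((X (snd e) - t) / (X (snd e) - X m))"
          unfolding ht_pair Ym Yj using line_shift[OF ne] by simp
        have h2: "(X (snd e) - t) / (X (snd e) - X m) > 0" using xm tr by simp
        have "s * (D * ((X (snd e) - t) / (X (snd e) - X m))) > 0" using sD h2
          by (metis mult.assoc mult_pos_pos)
        then have "s * ht (m, snd e) t > s * ht e t" using h1 AB by (simp add: algebra_simps)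
        then show False using emax[OF e'C] by simp
      next
        case False
        have e'C: "(fst e, m) \<in> C" using False e(1) m by (simp add: C_def)
        have "X (Suc g) \<le> X m" using X_le[of "Suc g" m] False m by simp
        then have xm: "t < X m" using Xg by (auto simp: t_def)
        have ne: "X (fst e) \<noteq> X m" using xm tr by simp
        have h1: "ht (fst e, m) t = (A + B * t) + D * ((t - X (fst e)) / (X m - X (fst e)))"
          unfolding ht_pair Ym Yi using line_shift2[OF ne] by simp
        have h2: "(t - X (fst e)) / (X m - X (fst e)) > 0" using xm tr by simp
        have "s * (D * ((t - X (fst e)) / (X m - X (fst e)))) > 0" using sD h2
          by (metis mult.assoc mult_pos_pos)
        then have "s * ht (fst e, m) t > s * ht e t" using h1 AB by (simp add: algebra_simps)
        then show False using emax[OF e'C] by simp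
      qed
    qed
  qed
  then have "supp s e" using ee by (simp add: supp_def)
  then show ?thesis using e(1) by (intro exI[of _ e]) (auto simp: C_def)
qed

lemma supp_compat:
  assumes sp: "supp s (i, j)" and ab: "a < n" "b < n" "a \<noteq> b" "{a, b} \<noteq> {i, j}"
  shows "closed_segment (P a) (P b) \<inter> closed_segment (P i) (P j) \<subseteq> P ` ({a, b} \<inter> {i, j})"
proof
  fix z assume z: "z \<in> closed_segment (P a) (P b) \<inter> closed_segment (P i) (P j)"
  have ee: "edge (i, j)" using sp by (simp add: supp_def)
  obtain A B where AB: "\<forall>t. ht (i, j) t = A + B * t" using ht_affine[OF ee] by blast
  define phi where "phi y = s * (w \<bullet> y - A - B * (u \<bullet> y))" for y
  have phi_aff: "phi ((1 - mu) *\<^sub>R p + mu *\<^sub>R q) = (1 - mu) * phi p + mu * phi q" for mu p q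
    by (simp add: phi_def inner_add_right algebra_simps)
  have phiP: "phi (P m) = s * (Y m - ht (i, j) (X m))" for m
    using AB by (simp add: phi_def X_def Y_def)
  have phii: "phi (P i) = 0" "phi (P j) = 0"
    using phiP ht_fst[OF ee] ht_snd[OF ee] by auto
  have neg: "m < n \<Longrightarrow> m \<noteq> i \<Longrightarrow> m \<noteq> j \<Longrightarrow> phi (P m) < 0" for m
    using sp phiP by (auto simp: supp_def)
  have z2: "z \<in> closed_segment (P i) (P j)" using z by auto
  obtain nu where nu: "0 \<le> nu" "nu \<le> 1" "z = (1 - nu) *\<^sub>R P i + nu *\<^sub>R P j"
    using z2 unfolding in_segment(1) by blast
  have phiz: "phi z = 0" using nu phi_aff phii by simp
  have z1: "z \<in> closed_segment (P a) (P b)" using z by auto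
  obtain mu where mu: "0 \<le> mu" "mu \<le> 1" "z = (1 - mu) *\<^sub>R P a + mu *\<^sub>R P b"
    using z1 unfolding in_segment(1) by blast
  have pz: "(1 - mu) * phi (P a) + mu * phi (P b) = 0" using phiz mu phi_aff by simp
  consider "a \<in> {i, j}" "b \<notin> {i, j}" | "a \<notin> {i, j}" "b \<in> {i, j}" | "a \<notin> {i, j}" "b \<notin> {i, j}"
    using ab by auto
  then show "z \<in> P ` ({a, b} \<inter> {i, j})"
  proof cases
    case 1
    then have "phi (P a) = 0" using phii by auto
    moreover have "phi (P b) < 0" using neg 1 ab by auto
    ultimately have "mu = 0" using pz mu by (simp add: mult_less_0_iff)
    then show ?thesis using mu 1 by auto
  next
    case 2
    then have "phi (P b) = 0" using phii by auto
    moreover have "phi (P a) < 0" using neg 2 ab by auto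
    ultimately have "mu = 1" using pz mu by (simp add: mult_less_0_iff)
    then show ?thesis using mu 2 by auto
  next
    case 3
    then have "phi (P a) < 0" "phi (P b) < 0" using neg ab by auto
    then have "(1 - mu) * phi (P a) + mu * phi (P b) < 0"
    proof (cases "mu = 0")
      case True then show ?thesis using \<open>phi (P a) < 0\<close> by simp
    next
      case False
      then have "mu * phi (P b) < 0" using mu \<open>phi (P b) < 0\<close> by (simp add: mult_pos_neg)
      moreover have "(1 - mu) * phi (P a) \<le> 0" using mu \<open>phi (P a) < 0\<close> by (simp add: mult_nonneg_nonpos)
      ultimately show ?thesis by simp
    qed
    then show ?thesis using pz by simp
  qed
qed

end

lemma card_by_color:
  assumes "finite A" "\<forall>e\<in>A. col e < (k::nat)"
  shows "card A = (\<Sum>l<k. card {e \<in> A. col e = l})"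
proof -
  have eq: "A = (\<Union>l<k. {e \<in> A. col e = l})" using assms(2) by auto
  have "card (\<Union>l<k. {e \<in> A. col e = l}) = (\<Sum>l<k. card {e \<in> A. col e = l})"
    by (rule card_UN_disjoint) (use assms(1) in auto)
  then show ?thesis using eq by simp
qed

context frame begin

lemma top_ht:
  assumes e: "edge e" "fst e < x" "x < snd e" and topY: "\<forall>m<n. m \<noteq> x \<longrightarrow> Y m < Y x"
  shows "ht e (X x) < Y x"
proof -
  have xn: "x < n" using e by (auto simp: edge_def)
  have l: "0 < lam e (X x)" "lam e (X x) < 1"
    using e X_less xn by (auto simp: lam_def edge_def field_simps)
  have ya: "Y (fst e) < Y x" "Y (snd e) < Y x" using topY e by (auto simp: edge_def)
  have "ht e (X x) = (1 - lam e (X x)) * Y (fst e) + lam e (X x) * Y (snd e)"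
    by (simp add: ht_def algebra_simps)
  also have "\<dots> < (1 - lam e (X x)) * Y x + lam e (X x) * Y x"
  proof -
    have "(1 - lam e (X x)) * Y (fst e) < (1 - lam e (X x)) * Y x" using l ya by simp
    moreover have "lam e (X x) * Y (snd e) < lam e (X x) * Y x" using l ya by simp
    ultimately show ?thesis by simp
  qed
  also have "\<dots> = Y x" by (simp add: algebra_simps)
  finally show ?thesis .
qed

lemma NLall_finite: "finite {e. edge e \<and> P' e}"
proof -
  have "{e. edge e \<and> P' e} \<subseteq> {..<n} \<times> {..<n}" by (auto simp: edge_def)
  then show ?thesis by (rule finite_subset) auto
qed

lemma layers_bound:
  assumes x: "1 \<le> x" "2 * x + 1 \<le> n"
    and topY: "\<forall>m<n. m \<noteq> x \<longrightarrow> Y m < Y x"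
    and colk: "\<forall>e. edge e \<longrightarrow> col e < k"
    and layer: "\<And>i j i' j'. edge (i, j) \<Longrightarrow> edge (i', j') \<Longrightarrow> (i, j) \<noteq> (i', j') \<Longrightarrow>
        col (i, j) = col (i', j') \<Longrightarrow>
        closed_segment (P i) (P j) \<inter> closed_segment (P i') (P j') \<subseteq> P ` ({i, j} \<inter> {i', j'})"
  shows "int (card {e. edge e \<and> x \<le> snd e \<and> fst e < n - x}) \<le> int k * (3 * int n - 2 * int x - 7) + 3"
proof -
  define NL where "NL = {e. edge e \<and> x \<le> snd e \<and> fst e < n - x}"
  have finNL: "finite NL" unfolding NL_def by (rule NLall_finite)
  obtain U where U: "supp 1 U" "fst U \<le> x - 1" "x - 1 < snd U"
    using supp_exists[of "x - 1" 1] x by auto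
  obtain D where D: "supp (-1) D" "fst D \<le> x - 1" "x - 1 < snd D"
    using supp_exists[of "x - 1" "-1"] x by auto
  obtain E where E: "supp 1 E" "fst E \<le> x" "x < snd E"
    using supp_exists[of x 1] x by auto
  have Ee: "edge E" "edge U" "edge D" using E U D by (auto simp: supp_def)
  have fE: "fst E = x"
  proof (rule ccontr)
    assume "fst E \<noteq> x"
    then have lt: "fst E < x" using E by simp
    have "ht E (X x) < Y x" using top_ht[OF Ee(1) lt E(3) topY] .
    moreover have "x < n" using x by simp
    then have "1 * (Y x - ht E (X x)) < 0" using E(1) lt E(3) unfolding supp_def by auto
    ultimately show False by simp
  qed
  have UD: "U \<noteq> D"
  proof
    assume "U = D"
    obtain m where m: "m < n" "m \<noteq> fst U" "m \<noteq> snd U"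
    proof -
      have n3: "(2::nat) < n" using x by simp
      have "\<exists>m::nat. m \<le> 2 \<and> m \<noteq> fst U \<and> m \<noteq> snd U"
      proof (cases "fst U = 0 \<or> snd U = 0")
        case True
        then show ?thesis
        proof (cases "fst U = 1 \<or> snd U = 1")
          case True
          then show ?thesis using \<open>fst U = 0 \<or> snd U = 0\<close> by (intro exI[of _ 2]) auto
        next
          case False
          then show ?thesis by (intro exI[of _ 1]) auto
        qed
      next
        case False
        then show ?thesis by (intro exI[of _ 0]) auto
      qed
      then show ?thesis using that n3 by (meson le_less_trans)
    qed
    then have "1 * (Y m - ht U (X m)) < 0" "-1 * (Y m - ht U (X m)) < 0"
      using U(1) D(1) \<open>U = D\<close> unfolding supp_def by auto
    then show False by simp
  qed
  have EU: "E \<noteq> U" "E \<noteq> D" using fE U D x by auto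
  define H where "H = {U, D, E}"
  have cardH: "card H = 3" using UD EU by (auto simp: H_def card_insert_if)
  have HNL: "H \<subseteq> NL" using U D E fE Ee x by (auto simp: H_def NL_def)
  have Hsupp: "\<And>e. e \<in> H \<Longrightarrow> \<exists>s. supp s e" using U D E by (auto simp: H_def)
  have finH: "finite H" by (simp add: H_def)
  define Gl where "Gl l = {e. edge e \<and> col e = l}" for l
  have per: "int (card {e \<in> Gl l \<union> H. x \<le> snd e \<and> fst e < n - x}) \<le> 3 * int n - 2 * int x - 4" for l
  proof -
    interpret sw: sweep P n u w "Gl l \<union> H"
    proof unfold_locales
      fix e assume "e \<in> Gl l \<union> H"
      then show "edge e" using Ee by (auto simp: Gl_def H_def)
    next
      fix i j i' j' assume h: "(i, j) \<in> Gl l \<union> H" "(i', j') \<in> Gl l \<union> H" "(i, j) \<noteq> (i', j')"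
      have ed: "edge (i, j)" "edge (i', j')" using h Ee by (auto simp: Gl_def H_def)
      have setne: "{i, j} \<noteq> {i', j'}" using ed h(3) by (auto simp: edge_def doubleton_eq_iff)
      have nn: "i < n" "j < n" "i \<noteq> j" "i' < n" "j' < n" "i' \<noteq> j'" using ed by (auto simp: edge_def)
      show "closed_segment (P i) (P j) \<inter> closed_segment (P i') (P j') \<subseteq> P ` ({i, j} \<inter> {i', j'})"
      proof (cases "(i', j') \<in> H")
        case True
        then obtain s where "supp s (i', j')" using Hsupp by blast
        then show ?thesis using supp_compat[of s i' j' i j] nn setne by auto
      next
        case False
        show ?thesis
        proof (cases "(i, j) \<in> H")
          case True
          then obtain s where "supp s (i, j)" using Hsupp by blast
          then have "closed_segment (P i') (P j') \<inter> closed_segment (P i) (P j) \<subseteq> P ` ({i', j'} \<inter> {i, j})"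
            using supp_compat[of s i j i' j'] nn setne by auto
          then show ?thesis by (simp add: Int_commute)
        next
          case F2: False
          then have "col (i, j) = l" "col (i', j') = l" using h False by (auto simp: Gl_def)
          then show ?thesis using layer[OF ed h(3)] by simp
        qed
      qed
    qed
    have top: "\<forall>e\<in>Gl l \<union> H. fst e < x \<longrightarrow> x < snd e \<longrightarrow> sw.vk x e < Y x"
    proof (intro ballI impI)
      fix e assume h: "e \<in> Gl l \<union> H" "fst e < x" "x < snd e"
      show "sw.vk x e < Y x" unfolding sw.vk_def by (rule top_ht[OF sw.G_edge[OF h(1)] h(2,3) topY])
    qed
    show ?thesis using sw.main_bound[OF x top] .
  qed
  have split: "card {e \<in> Gl l \<union> H. x \<le> snd e \<and> fst e < n - x} = card {e \<in> Gl l. x \<le> snd e \<and> fst e < n - x} + card (H - Gl l)" for l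
  proof -
    have eq: "{e \<in> Gl l \<union> H. x \<le> snd e \<and> fst e < n - x} = {e \<in> Gl l. x \<le> snd e \<and> fst e < n - x} \<union> (H - Gl l)"
      using HNL by (auto simp: NL_def)
    have f1: "finite {e \<in> Gl l. x \<le> snd e \<and> fst e < n - x}"
      using NLall_finite[of "\<lambda>e. col e = l \<and> x \<le> snd e \<and> fst e < n - x"] by (simp add: Gl_def conj_ac)
    show ?thesis unfolding eq by (rule card_Un_disjoint) (use f1 finH in auto)
  qed
  have cHG: "card (H - Gl l) = 3 - card (H \<inter> Gl l)" "card (H \<inter> Gl l) \<le> 3" for l
    using card_Diff_subset_Int[of H "Gl l"] finH cardH card_mono[OF finH, of "H \<inter> Gl l"] by (auto simp: Int_commute)
  have sumNL: "card NL = (\<Sum>l<k. card {e \<in> Gl l. x \<le> snd e \<and> fst e < n - x})"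
  proof -
    have "card NL = (\<Sum>l<k. card {e \<in> NL. col e = l})"
      by (rule card_by_color[OF finNL]) (use colk in \<open>auto simp: NL_def\<close>)
    moreover have "{e \<in> NL. col e = l} = {e \<in> Gl l. x \<le> snd e \<and> fst e < n - x}" for l
      by (auto simp: NL_def Gl_def)
    ultimately show ?thesis by simp
  qed
  have sumH: "3 = (\<Sum>l<k. card (H \<inter> Gl l))"
  proof -
    have "card H = (\<Sum>l<k. card {e \<in> H. col e = l})"
      by (rule card_by_color[OF finH]) (use colk HNL in \<open>auto simp: NL_def\<close>)
    moreover have "{e \<in> H. col e = l} = H \<inter> Gl l" for l
      using HNL by (auto simp: NL_def Gl_def)
    ultimately show ?thesis using cardH by simp
  qed
  have "\<forall>l. int (card {e \<in> Gl l. x \<le> snd e \<and> fst e < n - x}) + 3 - int (card (H \<inter> Gl l)) \<le> 3 * int n - 2 * int x - 4"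
  proof
    fix l
    have "int (card {e \<in> Gl l \<union> H. x \<le> snd e \<and> fst e < n - x})
      = int (card {e \<in> Gl l. x \<le> snd e \<and> fst e < n - x}) + 3 - int (card (H \<inter> Gl l))"
      using split[of l] cHG[of l] by simp
    then show "int (card {e \<in> Gl l. x \<le> snd e \<and> fst e < n - x}) + 3 - int (card (H \<inter> Gl l)) \<le> 3 * int n - 2 * int x - 4"
      using per[of l] by simp
  qed
  then have "(\<Sum>l<k. int (card {e \<in> Gl l. x \<le> snd e \<and> fst e < n - x}) + 3 - int (card (H \<inter> Gl l)))
      \<le> (\<Sum>l<k. 3 * int n - 2 * int x - 4)"
    by (intro sum_mono) auto
  moreover have "(\<Sum>l<k. int (card {e \<in> Gl l. x \<le> snd e \<and> fst e < n - x}) + 3 - int (card (H \<inter> Gl l)))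
      = int (card NL) + 3 * int k - 3"
  proof -
    have "(\<Sum>l<k. int (card {e \<in> Gl l. x \<le> snd e \<and> fst e < n - x}) + 3 - int (card (H \<inter> Gl l)))
       = (\<Sum>l<k. int (card {e \<in> Gl l. x \<le> snd e \<and> fst e < n - x})) + 3 * int k - (\<Sum>l<k. int (card (H \<inter> Gl l)))"
      by (simp add: sum.distrib sum_subtractf)
    also have "\<dots> = int (card NL) + 3 * int k - 3"
      using sumNL sumH by (simp flip: of_nat_sum)
    finally show ?thesis .
  qed
  ultimately have "int (card NL) + 3 * int k - 3 \<le> int k * (3 * int n - 2 * int x - 4)" by simp
  then show ?thesis unfolding NL_def[symmetric] by (simp add: algebra_simps)
qed

end

definition perp :: "real^2 \<Rightarrow> real^2" where "perp w = vector [-(w$2), w$1]"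

lemma inner2: "(a::real^2) \<bullet> b = a$1 * b$1 + a$2 * b$2"
  by (simp add: inner_vec_def sum_2)

lemma perp_indep:
  assumes "w \<noteq> 0" "perp w \<bullet> d = 0" "w \<bullet> d = 0"
  shows "d = 0"
proof -
  have e1: "-(w$2) * d$1 + w$1 * d$2 = 0" using assms(2) by (simp add: inner2 perp_def)
  have e2: "w$1 * d$1 + w$2 * d$2 = 0" using assms(3) by (simp add: inner2)
  have pos: "w$1 * w$1 + w$2 * w$2 > 0"
  proof -
    have "w$1 \<noteq> 0 \<or> w$2 \<noteq> 0" using assms(1) by (auto simp: vec_eq_iff forall_2)
    then show ?thesis
    proof
      assume "w$1 \<noteq> 0"
      then have "w$1 * w$1 > 0" using not_real_square_gt_zero by blast
      moreover have "w$2 * w$2 \<ge> 0" by simp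
      ultimately show ?thesis by linarith
    next
      assume "w$2 \<noteq> 0"
      then have "w$2 * w$2 > 0" using not_real_square_gt_zero by blast
      moreover have "w$1 * w$1 \<ge> 0" by simp
      ultimately show ?thesis by linarith
    qed
  qed
  have "(w$1 * w$1 + w$2 * w$2) * d$1 = w$1 * (w$1 * d$1 + w$2 * d$2) - w$2 * (-(w$2) * d$1 + w$1 * d$2)"
    by (simp add: algebra_simps)
  then have "(w$1 * w$1 + w$2 * w$2) * d$1 = 0" using e1 e2 by simp
  then have "d$1 = 0" using pos by (simp only: mult_eq_0_iff) auto
  have "(w$1 * w$1 + w$2 * w$2) * d$2 = w$2 * (w$1 * d$1 + w$2 * d$2) + w$1 * (-(w$2) * d$1 + w$1 * d$2)"
    by (simp add: algebra_simps)
  then have "(w$1 * w$1 + w$2 * w$2) * d$2 = 0" using e1 e2 by simp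
  then have "d$2 = 0" using pos by (simp only: mult_eq_0_iff) auto
  show "d = 0" using \<open>d$1 = 0\<close> \<open>d$2 = 0\<close> by (simp add: vec_eq_iff forall_2)
qed

lemma strict_sorted_card_less:
  fixes xs :: "real list"
  assumes "sorted_wrt (<) xs" "i < length xs"
  shows "card {v \<in> set xs. v < xs ! i} = i"
proof -
  have "{v \<in> set xs. v < xs ! i} = set (take i xs)"
  proof
    show "{v \<in> set xs. v < xs ! i} \<subseteq> set (take i xs)"
    proof
      fix v assume v: "v \<in> {v \<in> set xs. v < xs ! i}"
      then obtain j where j: "j < length xs" "v = xs ! j" by (auto simp: in_set_conv_nth)
      have "j < i"
      proof (rule ccontr)
        assume "\<not> j < i"
        then have "xs ! i \<le> xs ! j"
        proof (cases "i = j")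
          case False
          then have "i < j" using \<open>\<not> j < i\<close> by simp
          then show ?thesis using sorted_wrt_nth_less[OF assms(1)] j by fastforce
        qed simp
        then show False using v j by simp
      qed
      then show "v \<in> set (take i xs)" using j by (auto simp: in_set_conv_nth)
    qed
    show "set (take i xs) \<subseteq> {v \<in> set xs. v < xs ! i}"
    proof
      fix v assume "v \<in> set (take i xs)"
      then obtain j where j: "j < i" "v = xs ! j" using assms(2) by (auto simp: in_set_conv_nth)
      then show "v \<in> {v \<in> set xs. v < xs ! i}" using assms sorted_wrt_nth_less[OF assms(1)] by auto
    qed
  qed
  moreover have "distinct (take i xs)" using assms(1) by (simp add: strict_sorted_iff)
  ultimately show ?thesis using assms(2) by (simp add: distinct_card)
qed

lemma strict_sorted_card_between:
  fixes xs :: "real list"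
  assumes "sorted_wrt (<) xs" "0 < i" "i < length xs" "xs ! (i - 1) < s" "s < xs ! i"
  shows "card {v \<in> set xs. v < s} = i"
proof -
  have "{v \<in> set xs. v < s} = {v \<in> set xs. v < xs ! i}"
  proof (intro Collect_cong conj_cong refl iffI)
    fix v assume "v \<in> set xs" "v < s" then show "v < xs ! i" using assms by simp
  next
    fix v assume v: "v \<in> set xs" "v < xs ! i"
    then obtain j where j: "j < length xs" "v = xs ! j" by (auto simp: in_set_conv_nth)
    have "j < i"
    proof (rule ccontr)
      assume "\<not> j < i"
      then have "xs ! i \<le> xs ! j"
      proof (cases "i = j")
        case False
        then have "i < j" using \<open>\<not> j < i\<close> by simp
        then show ?thesis using sorted_wrt_nth_less[OF assms(1)] j by fastforce
      qed simp
      then show False using v j by simp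
    qed
    then have "xs ! j \<le> xs ! (i - 1)"
    proof (cases "j = i - 1")
      case False
      then have "j < i - 1" using \<open>j < i\<close> by simp
      then show ?thesis using sorted_wrt_nth_less[OF assms(1)] assms(3) by fastforce
    qed simp
    then show "v < s" using j assms by simp
  qed
  then show ?thesis using strict_sorted_card_less[OF assms(1,3)] by simp
qed

lemma norm_max_strict:
  fixes a w :: "real^2"
  assumes "norm a \<le> norm w" "a \<noteq> w"
  shows "w \<bullet> a < w \<bullet> w"
proof (rule ccontr)
  assume "\<not> w \<bullet> a < w \<bullet> w"
  then have h: "w \<bullet> w \<le> w \<bullet> a" by simp
  have aa: "a \<bullet> a \<le> w \<bullet> w" using assms(1) by (simp add: norm_le)
  have "(a - w) \<bullet> (a - w) = a \<bullet> a - 2 * (w \<bullet> a) + w \<bullet> w"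
    by (simp add: inner_diff_left inner_diff_right inner_commute)
  also have "\<dots> \<le> 0" using h aa by simp
  finally have "(a - w) \<bullet> (a - w) \<le> 0" .
  then have "(a - w) \<bullet> (a - w) = 0" using inner_ge_zero[of "a - w"] by linarith
  then have "a - w = 0" by simp
  then show False using assms(2) by simp
qed

lemma slopes_inj_aux:
  fixes dm dq w :: "real^2" and am aq :: real
  assumes "0 < am" "am \<le> aq" "aq *\<^sub>R dm = am *\<^sub>R dq" "pc + dq = pq" "pc + dm = pm"
  shows "pm \<in> closed_segment pc pq"
proof -
  have aq: "aq > 0" using assms by simp
  define t where "t = am / aq"
  have t: "0 \<le> t" "t \<le> 1" using assms aq by (auto simp: t_def)
  have "dm = (1 / aq) *\<^sub>R (aq *\<^sub>R dm)" using aq by simp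
  also have "\<dots> = (1 / aq) *\<^sub>R (am *\<^sub>R dq)" using assms(3) by simp
  also have "\<dots> = t *\<^sub>R dq" by (simp add: t_def)
  finally have "dm = t *\<^sub>R dq" .
  then have "pm = (1 - t) *\<^sub>R pc + t *\<^sub>R pq" using assms(4,5) by (auto simp: algebra_simps)
  then show ?thesis using t unfolding in_segment(1) by blast
qed


lemma frame_exists:
  fixes p :: "nat \<Rightarrow> real^2"
  assumes inj: "inj_on p {..<n}"
    and nv: "\<And>a b v. a < n \<Longrightarrow> b < n \<Longrightarrow> v < n \<Longrightarrow> a \<noteq> b \<Longrightarrow> v \<noteq> a \<Longrightarrow> v \<noteq> b \<Longrightarrow>
               p v \<notin> closed_segment (p a) (p b)"
    and x: "1 \<le> x" "2 * x + 1 \<le> n"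
  shows "\<exists>\<pi> u w. bij_betw \<pi> {..<n} {..<n} \<and> frame (p \<circ> \<pi>) n u w \<and>
           (\<forall>m<n. m \<noteq> x \<longrightarrow> w \<bullet> p (\<pi> m) < w \<bullet> p (\<pi> x))"
proof -
  have n3: "3 \<le> n" using x by simp
  have "Max ((\<lambda>m. norm (p m)) ` {..<n}) \<in> (\<lambda>m. norm (p m)) ` {..<n}"
  proof (rule Max_in)
    show "(\<lambda>m. norm (p m)) ` {..<n} \<noteq> {}" using n3 by (metis empty_iff image_is_empty lessThan_iff not_gr0 not_numeral_le_zero)
  qed simp
  then obtain c where c: "c < n" "norm (p c) = Max ((\<lambda>m. norm (p m)) ` {..<n})" by auto
  have cmax: "norm (p m) \<le> norm (p c)" if "m < n" for m
    using c(2) that by simp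
  define w where "w = p c"
  have wlt: "w \<bullet> p m < w \<bullet> p c" if "m < n" "m \<noteq> c" for m
  proof -
    have "p m \<noteq> p c" using inj that c(1) by (auto dest: inj_onD)
    then show ?thesis using norm_max_strict[OF cmax[OF that(1)]] by (simp add: w_def)
  qed
  have w0: "w \<noteq> 0"
  proof
    assume "w = 0"
    define m where "m = (if c = 0 then 1 else (0::nat))"
    have m: "m < n" "m \<noteq> c" using n3 by (auto simp: m_def)
    show False using wlt[OF m] \<open>w = 0\<close> by (simp add: w_def)
  qed
  define wp where "wp = perp w"
  define al where "al m = w \<bullet> p c - w \<bullet> p m" for m
  define sl where "sl m = (wp \<bullet> (p m - p c)) / al m" for m
  have alpos: "al m > 0" if "m < n" "m \<noteq> c" for m using wlt[OF that] by (simp add: al_def)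
  have slinj: "inj_on sl ({..<n} - {c})"
  proof (rule inj_onI)
    fix m q assume mq: "m \<in> {..<n} - {c}" "q \<in> {..<n} - {c}" "sl m = sl q"
    show "m = q"
    proof (rule ccontr)
      assume ne: "m \<noteq> q"
      have am: "al m > 0" and aq: "al q > 0" using alpos mq by auto
      define dm where "dm = p m - p c"
      define dq where "dq = p q - p c"
      have wdm: "w \<bullet> dm = - al m" "w \<bullet> dq = - al q" by (simp_all add: dm_def dq_def al_def inner_diff_right)
      have pdm: "wp \<bullet> dm = sl m * al m" "wp \<bullet> dq = sl q * al q"
        using am aq by (simp_all add: sl_def dm_def dq_def)
      have "al q *\<^sub>R dm - al m *\<^sub>R dq = 0"
      proof (rule perp_indep[OF w0])
        show "perp w \<bullet> (al q *\<^sub>R dm - al m *\<^sub>R dq) = 0"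
          using pdm mq(3) unfolding wp_def[symmetric] by (simp add: inner_diff_right algebra_simps)
        show "w \<bullet> (al q *\<^sub>R dm - al m *\<^sub>R dq) = 0"
          using wdm by (simp add: inner_diff_right algebra_simps)
      qed
      then have eq: "al q *\<^sub>R dm = al m *\<^sub>R dq" by simp
      show False
      proof (cases "al m \<le> al q")
        case True
        have "p m \<in> closed_segment (p c) (p q)"
          by (rule slopes_inj_aux[OF am True eq]) (simp_all add: dm_def dq_def)
        then show False using nv[of c q m] mq ne c(1) by auto
      next
        case False
        have "p q \<in> closed_segment (p c) (p m)"
          by (rule slopes_inj_aux[of "al q" "al m" dq dm]) (use aq False eq in \<open>simp_all add: dm_def dq_def\<close>)
        then show False using nv[of c m q] mq ne c(1) by auto
      qed
    qed
  qed
  define V where "V = sl ` ({..<n} - {c})"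
  have cardV: "card V = n - 1" unfolding V_def using card_image[OF slinj] c(1) by simp
  define vs where "vs = sorted_list_of_set V"
  have finV: "finite V" by (simp add: V_def)
  have vs: "sorted_wrt (<) vs" "set vs = V" "length vs = n - 1"
    using finV cardV by (simp_all add: vs_def strict_sorted_iff)
  have xl: "x < length vs" using vs(3) x by simp
  have lohi: "vs ! (x - 1) < vs ! x" using sorted_wrt_nth_less[OF vs(1)] xl x by simp
  define B where "B = (\<lambda>(m, q). - (wp \<bullet> (p m - p q)) / (w \<bullet> (p m - p q))) ` ({..<n} \<times> {..<n})"
  have finB: "finite B" by (simp add: B_def)
  have "infinite {vs ! (x - 1)<..<vs ! x}" using lohi by simp
  then have "infinite ({vs ! (x - 1)<..<vs ! x} - B)" by (rule Diff_infinite_finite[OF finB])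
  then have "{vs ! (x - 1)<..<vs ! x} - B \<noteq> {}" by (rule infinite_imp_nonempty)
  then obtain sg where sg: "sg \<in> {vs ! (x - 1)<..<vs ! x}" "sg \<notin> B" by blast
  define u where "u = wp + sg *\<^sub>R w"
  have Xdist: "u \<bullet> p m \<noteq> u \<bullet> p q" if "m < n" "q < n" "m \<noteq> q" for m q
  proof
    assume h: "u \<bullet> p m = u \<bullet> p q"
    define d where "d = p m - p q"
    have d0: "d \<noteq> 0" using inj that by (auto simp: d_def dest: inj_onD)
    have ud: "wp \<bullet> d + sg * (w \<bullet> d) = 0" using h by (simp add: u_def d_def inner_diff_right algebra_simps)
    show False
    proof (cases "w \<bullet> d = 0")
      case True
      then have "wp \<bullet> d = 0" using ud by simp
      then show False using perp_indep[OF w0] True d0 by (simp add: wp_def)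
    next
      case False
      then have "sg = - (wp \<bullet> d) / (w \<bullet> d)" using ud by (simp add: field_simps)
      moreover have "(m, q) \<in> {..<n} \<times> {..<n}" using that by simp
      ultimately have "sg \<in> B" unfolding B_def d_def
        by (intro image_eqI[of _ _ "(m, q)"]) auto
      then show False using sg(2) by simp
    qed
  qed
  have XYinj: "z = z'" if "u \<bullet> z = u \<bullet> z'" "w \<bullet> z = w \<bullet> z'" for z z'
  proof -
    have h: "perp w \<bullet> (z - z') = 0" "w \<bullet> (z - z') = 0"
      using that by (simp_all add: u_def wp_def inner_diff_right algebra_simps)
    have "z - z' = 0" by (rule perp_indep[OF w0 h])
    then show ?thesis by simp
  qed
  define Xv where "Xv m = u \<bullet> p m" for m
  have below: "{m \<in> {..<n}. Xv m < Xv c} = {m \<in> {..<n} - {c}. sl m < sg}"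
  proof (intro set_eqI iffI)
    fix m assume "m \<in> {m \<in> {..<n}. Xv m < Xv c}"
    then have m: "m < n" "m \<noteq> c" "Xv m < Xv c" by auto
    have a: "al m > 0" using alpos m by simp
    have as: "al m * sl m = wp \<bullet> (p m - p c)" using a by (simp add: sl_def)
    have "Xv m - Xv c = wp \<bullet> (p m - p c) - sg * al m"
      by (simp add: Xv_def u_def al_def inner_diff_right inner_add_left algebra_simps)
    then have "Xv m - Xv c = al m * (sl m - sg)" using as by (simp add: algebra_simps)
    then have "al m * (sl m - sg) < 0" using m(3) by simp
    then have "sl m - sg < 0" using a by (simp add: mult_less_0_iff)
    then have "sl m < sg" by simp
    then show "m \<in> {m \<in> {..<n} - {c}. sl m < sg}" using m by simp
  next
    fix m assume "m \<in> {m \<in> {..<n} - {c}. sl m < sg}"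
    then have m: "m < n" "m \<noteq> c" "sl m < sg" by auto
    have a: "al m > 0" using alpos m by simp
    have as: "al m * sl m = wp \<bullet> (p m - p c)" using a by (simp add: sl_def)
    have "Xv m - Xv c = wp \<bullet> (p m - p c) - sg * al m"
      by (simp add: Xv_def u_def al_def inner_diff_right inner_add_left algebra_simps)
    then have "Xv m - Xv c = al m * (sl m - sg)" using as by (simp add: algebra_simps)
    moreover have "al m * (sl m - sg) < 0" using m(3) a by (simp add: mult_pos_neg)
    ultimately have "Xv m < Xv c" by simp
    then show "m \<in> {m \<in> {..<n}. Xv m < Xv c}" using m by simp
  qed
  have rankc: "card {m \<in> {..<n}. Xv m < Xv c} = x"
  proof -
    have "card {m \<in> {..<n} - {c}. sl m < sg} = card (sl ` {m \<in> {..<n} - {c}. sl m < sg})"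
      by (rule card_image[symmetric]) (rule inj_on_subset[OF slinj], auto)
    also have "sl ` {m \<in> {..<n} - {c}. sl m < sg} = {v \<in> set vs. v < sg}"
      using vs(2) by (auto simp: V_def)
    also have "card {v \<in> set vs. v < sg} = x"
      using strict_sorted_card_between[OF vs(1) _ xl] sg(1) x by simp
    finally show ?thesis using below by simp
  qed
  have Xinj: "inj_on Xv {..<n}"
  proof (rule inj_onI)
    fix m q assume "m \<in> {..<n}" "q \<in> {..<n}" "Xv m = Xv q"
    then show "m = q" using Xdist[of m q] by (auto simp: Xv_def)
  qed
  define xs where "xs = sorted_list_of_set (Xv ` {..<n})"
  have xs: "sorted_wrt (<) xs" "set xs = Xv ` {..<n}" "length xs = n"
    using card_image[OF Xinj] by (simp_all add: xs_def strict_sorted_iff)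
  define pi where "pi i = inv_into {..<n} Xv (xs ! i)" for i
  have pi: "pi i < n" "Xv (pi i) = xs ! i" if "i < n" for i
  proof -
    have "xs ! i \<in> Xv ` {..<n}" using xs that by (metis nth_mem)
    then show "pi i < n" "Xv (pi i) = xs ! i" unfolding pi_def
      using inv_into_into[of "xs ! i" Xv "{..<n}"] f_inv_into_f[of "xs ! i" Xv "{..<n}"] by auto
  qed
  have pinj: "inj_on pi {..<n}"
  proof (rule inj_onI)
    fix i j assume "i \<in> {..<n}" "j \<in> {..<n}" "pi i = pi j"
    then have "xs ! i = xs ! j" using pi by (metis lessThan_iff)
    then show "i = j" using xs \<open>i \<in> {..<n}\<close> \<open>j \<in> {..<n}\<close>
      by (simp add: nth_eq_iff_index_eq strict_sorted_iff)
  qed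
  have pibij: "bij_betw pi {..<n} {..<n}"
  proof -
    have "pi ` {..<n} \<subseteq> {..<n}" using pi by auto
    then have "pi ` {..<n} = {..<n}" using pinj by (simp add: endo_inj_surj)
    then show ?thesis using pinj by (simp add: bij_betw_def)
  qed
  have pix: "pi x = c"
  proof -
    have "Xv c \<in> set xs" using xs c(1) by simp
    then obtain i where i: "i < length xs" "xs ! i = Xv c" by (auto simp: in_set_conv_nth)
    then have i: "i < n" "xs ! i = Xv c" using xs(3) by auto
    have "card {v \<in> set xs. v < xs ! i} = i" using strict_sorted_card_less[OF xs(1), of i] i(1) xs(3) by simp
    moreover have "{v \<in> set xs. v < xs ! i} = Xv ` {m \<in> {..<n}. Xv m < Xv c}" using xs(2) i by auto
    moreover have "card (Xv ` {m \<in> {..<n}. Xv m < Xv c}) = x"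
    proof -
      have "inj_on Xv {m \<in> {..<n}. Xv m < Xv c}" by (rule inj_on_subset[OF Xinj]) auto
      then show ?thesis using rankc by (simp add: card_image)
    qed
    ultimately have "i = x" by simp
    then show ?thesis using i c(1) by (simp add: pi_def inv_into_f_f[OF Xinj])
  qed
  have fr: "frame (p \<circ> pi) n u w"
  proof
    fix i j assume ij: "i < j" "j < n"
    have "xs ! i < xs ! j" using sorted_wrt_nth_less[OF xs(1)] ij xs(3) by simp
    then show "u \<bullet> (p \<circ> pi) i < u \<bullet> (p \<circ> pi) j" using pi ij by (simp add: Xv_def)
  next
    fix z z' :: "real^2" assume "u \<bullet> z = u \<bullet> z'" "w \<bullet> z = w \<bullet> z'"
    then show "z = z'" by (rule XYinj)
  next
    fix i j m assume h: "i < n" "j < n" "m < n" "m \<noteq> i" "m \<noteq> j"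
    have ne: "pi m \<noteq> pi i" "pi m \<noteq> pi j" using pinj h by (auto dest: inj_onD)
    show "(p \<circ> pi) m \<notin> closed_segment ((p \<circ> pi) i) ((p \<circ> pi) j)"
    proof (cases "pi i = pi j")
      case True
      then show ?thesis using ne inj pi h by (auto dest: inj_onD)
    next
      case False
      then show ?thesis using nv[of "pi i" "pi j" "pi m"] ne pi h by auto
    qed
  qed
  have top: "\<forall>m<n. m \<noteq> x \<longrightarrow> w \<bullet> p (pi m) < w \<bullet> p (pi x)"
  proof (intro allI impI)
    fix m assume "m < n" "m \<noteq> x"
    then have "pi m \<noteq> c" "pi m < n" using pinj pix pi x by (auto dest: inj_onD)
    then show "w \<bullet> p (pi m) < w \<bullet> p (pi x)" using wlt pix by simp
  qed
  show ?thesis using pibij fr top by blast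
qed

lemma choose2_Suc: "Suc m choose 2 = m + (m choose 2)"
  by (simp add: numeral_2_eq_2)

lemma choose2_real: "real (m choose 2) = real m * (real m - 1) / 2"
proof (induction m)
  case 0 then show ?case by simp
next
  case (Suc m)
  then show ?case by (simp add: choose2_Suc field_simps)
qed

lemma pairs_card: "card {e :: nat \<times> nat. fst e < snd e \<and> snd e < m} = m choose 2"
proof (induction m)
  case 0 then show ?case by simp
next
  case (Suc m)
  have eq: "{e :: nat \<times> nat. fst e < snd e \<and> snd e < Suc m} =
        {e. fst e < snd e \<and> snd e < m} \<union> (\<lambda>i. (i, m)) ` {..<m}"
    by (auto simp: less_Suc_eq)
  have fin: "finite {e :: nat \<times> nat. fst e < snd e \<and> snd e < m}"
    by (rule finite_subset[of _ "{..<m} \<times> {..<m}"]) auto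
  have "card ({e :: nat \<times> nat. fst e < snd e \<and> snd e < m} \<union> (\<lambda>i. (i, m)) ` {..<m})
      = card {e :: nat \<times> nat. fst e < snd e \<and> snd e < m} + card ((\<lambda>i. (i, m)) ` {..<m})"
    by (rule card_Un_disjoint) (use fin in auto)
  moreover have "card ((\<lambda>i. (i, m)) ` {..<m}) = m" by (simp add: card_image inj_on_def)
  ultimately show ?case using Suc eq by (simp add: choose2_Suc)
qed

lemma NL_count:
  assumes "2 * x \<le> n"
  shows "card {e :: nat \<times> nat. fst e < snd e \<and> snd e < n \<and> x \<le> snd e \<and> fst e < n - x}
         + 2 * (x choose 2) = n choose 2"
proof -
  define T where "T = {e :: nat \<times> nat. fst e < snd e \<and> snd e < n}"
  define Lo where "Lo = {e :: nat \<times> nat. fst e < snd e \<and> snd e < x}"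
  define Hi where "Hi = {e :: nat \<times> nat. n - x \<le> fst e \<and> fst e < snd e \<and> snd e < n}"
  define NL where "NL = {e :: nat \<times> nat. fst e < snd e \<and> snd e < n \<and> x \<le> snd e \<and> fst e < n - x}"
  have finT: "finite T" by (rule finite_subset[of _ "{..<n} \<times> {..<n}"]) (auto simp: T_def)
  have cT: "card T = n choose 2" using pairs_card by (simp add: T_def)
  have cLo: "card Lo = x choose 2" using pairs_card by (simp add: Lo_def)
  have cHi: "card Hi = x choose 2"
  proof -
    have "Hi = (\<lambda>e. (fst e + (n - x), snd e + (n - x))) ` Lo"
    proof (intro set_eqI iffI)
      fix e assume "e \<in> Hi"
      then have "(fst e - (n - x), snd e - (n - x)) \<in> Lo" "e = (\<lambda>e. (fst e + (n - x), snd e + (n - x))) (fst e - (n - x), snd e - (n - x))"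
        using assms by (auto simp: Hi_def Lo_def)
      then show "e \<in> (\<lambda>e. (fst e + (n - x), snd e + (n - x))) ` Lo" by blast
    qed (use assms in \<open>auto simp: Hi_def Lo_def\<close>)
    moreover have "inj_on (\<lambda>e. (fst e + (n - x), snd e + (n - x))) Lo"
      by (auto simp: inj_on_def prod_eq_iff)
    ultimately show ?thesis using cLo by (simp add: card_image)
  qed
  have split: "T = NL \<union> (Lo \<union> Hi)" using assms by (auto simp: T_def NL_def Lo_def Hi_def)
  have d1: "NL \<inter> (Lo \<union> Hi) = {}" using assms by (auto simp: NL_def Lo_def Hi_def)
  have d2: "Lo \<inter> Hi = {}" using assms by (auto simp: Lo_def Hi_def)
  have fins: "finite NL" "finite Lo" "finite Hi" using finT split by (auto intro: finite_subset)
  have "card T = card NL + (card Lo + card Hi)"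
    using split card_Un_disjoint[OF fins(1) _ d1] card_Un_disjoint[OF fins(2,3) d2] fins by simp
  then show ?thesis using cT cLo cHi by (simp add: NL_def)
qed

lemma cge_mem: "a \<noteq> b \<Longrightarrow> a < n \<Longrightarrow> b < n \<Longrightarrow> {a, b} \<in> complete_graph_edges n"
  by (auto simp: complete_graph_edges_def)

lemma drawing_bound:
  assumes dr: "geometric_drawing {..<n} (complete_graph_edges n) k"
    and x: "1 \<le> x" "2 * x + 1 \<le> n"
  shows "int (n choose 2) - 2 * int (x choose 2) \<le> int k * (3 * int n - 2 * int x - 7) + 3"
proof -
  obtain p :: "nat \<Rightarrow> real^2" and col :: "nat set \<Rightarrow> nat" where
    inj: "inj_on p {..<n}" and
    nv0: "\<forall>a b v. {a, b} \<in> complete_graph_edges n \<longrightarrow> v \<in> {..<n} \<longrightarrow> v \<noteq> a \<longrightarrow> v \<noteq> b \<longrightarrow>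
           p v \<notin> closed_segment (p a) (p b)" and
    ck: "\<forall>e\<in>complete_graph_edges n. col e < k" and
    lay: "\<forall>a b a' b'. {a, b} \<in> complete_graph_edges n \<longrightarrow> {a', b'} \<in> complete_graph_edges n \<longrightarrow>
           {a, b} \<noteq> {a', b'} \<longrightarrow> col {a, b} = col {a', b'} \<longrightarrow>
           closed_segment (p a) (p b) \<inter> closed_segment (p a') (p b') \<subseteq> p ` ({a, b} \<inter> {a', b'})"
    using dr unfolding geometric_drawing_def
    apply (elim exE conjE)
    apply (rule that)
       apply assumption+
    done
  have nv: "\<And>a b v. a < n \<Longrightarrow> b < n \<Longrightarrow> v < n \<Longrightarrow> a \<noteq> b \<Longrightarrow> v \<noteq> a \<Longrightarrow> v \<noteq> b \<Longrightarrow>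
               p v \<notin> closed_segment (p a) (p b)"
    using nv0 cge_mem by blast
  obtain pi u w where pi: "bij_betw pi {..<n} {..<n}" and fr: "frame (p \<circ> pi) n u w"
      and top: "\<forall>m<n. m \<noteq> x \<longrightarrow> w \<bullet> p (pi m) < w \<bullet> p (pi x)"
    using frame_exists[OF inj nv x] by blast
  interpret frame "p \<circ> pi" n u w by (rule fr)
  have pin: "\<And>i. i < n \<Longrightarrow> pi i < n" using pi by (auto simp: bij_betw_def)
  have piinj: "inj_on pi {..<n}" using pi by (auto simp: bij_betw_def)
  define cl where "cl e = col {pi (fst e), pi (snd e)}" for e
  have "int (card {e. edge e \<and> x \<le> snd e \<and> fst e < n - x}) \<le> int k * (3 * int n - 2 * int x - 7) + 3"
  proof (rule layers_bound[OF x])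
    show "\<forall>m<n. m \<noteq> x \<longrightarrow> Y m < Y x" using top by (simp add: Y_def)
    show "\<forall>e. edge e \<longrightarrow> cl e < k"
    proof (intro allI impI)
      fix e assume "edge e"
      then have "pi (fst e) \<noteq> pi (snd e)" "pi (fst e) < n" "pi (snd e) < n"
        using piinj pin by (auto simp: edge_def dest: inj_onD)
      then show "cl e < k" using ck cge_mem by (simp add: cl_def)
    qed
    fix i j i' j' assume h: "edge (i, j)" "edge (i', j')" "(i, j) \<noteq> (i', j')" "cl (i, j) = cl (i', j')"
    have nn: "i < n" "j < n" "i' < n" "j' < n" "i < j" "i' < j'" using h by (auto simp: edge_def)
    have ne: "pi i \<noteq> pi j" "pi i' \<noteq> pi j'" using nn piinj by (auto dest: inj_onD)
    have setne: "{pi i, pi j} \<noteq> {pi i', pi j'}"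
    proof
      assume "{pi i, pi j} = {pi i', pi j'}"
      then have e: "pi ` {i, j} = pi ` {i', j'}" by simp
      have "{i, j} \<subseteq> {..<n}" "{i', j'} \<subseteq> {..<n}" using nn by auto
      then have "{i, j} = {i', j'}" using inj_on_image_eq_iff[OF piinj] e by blast
      then show False using h(3) nn by (auto simp: doubleton_eq_iff)
    qed
    have "closed_segment (p (pi i)) (p (pi j)) \<inter> closed_segment (p (pi i')) (p (pi j'))
          \<subseteq> p ` ({pi i, pi j} \<inter> {pi i', pi j'})"
      using lay cge_mem[OF ne(1) pin[OF nn(1)] pin[OF nn(2)]] cge_mem[OF ne(2) pin[OF nn(3)] pin[OF nn(4)]]
        setne h(4) by (simp add: cl_def)
    moreover have "{pi i, pi j} \<inter> {pi i', pi j'} = pi ` ({i, j} \<inter> {i', j'})"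
      using inj_on_image_Int[OF piinj, of "{i, j}" "{i', j'}"] nn by auto
    ultimately show "closed_segment ((p \<circ> pi) i) ((p \<circ> pi) j) \<inter> closed_segment ((p \<circ> pi) i') ((p \<circ> pi) j')
          \<subseteq> (p \<circ> pi) ` ({i, j} \<inter> {i', j'})" by (simp add: image_comp)
  qed
  moreover have "card {e. edge e \<and> x \<le> snd e \<and> fst e < n - x} + 2 * (x choose 2) = n choose 2"
    using NL_count[of x n] x by (simp add: edge_def conj_assoc)
  ultimately show ?thesis by linarith
qed

definition parab :: "nat \<Rightarrow> real^2" where "parab i = vector [real i, real i ^ 2]"

lemma parab_not_between:
  assumes "a \<noteq> b" "v \<noteq> a" "v \<noteq> b"
  shows "parab v \<notin> closed_segment (parab a) (parab b)"
proof
  assume "parab v \<in> closed_segment (parab a) (parab b)"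
  then obtain mu where mu: "0 \<le> mu" "mu \<le> 1" "parab v = (1 - mu) *\<^sub>R parab a + mu *\<^sub>R parab b"
    unfolding in_segment(1) by blast
  have c1: "real v = (1 - mu) * real a + mu * real b"
    using arg_cong[OF mu(3), of "\<lambda>z. z$1"] by (simp add: parab_def)
  have c2: "real v ^ 2 = (1 - mu) * real a ^ 2 + mu * real b ^ 2"
    using arg_cong[OF mu(3), of "\<lambda>z. z$2"] by (simp add: parab_def)
  have "mu * (1 - mu) * (real a - real b) ^ 2 = (1 - mu) * real a ^ 2 + mu * real b ^ 2 - ((1 - mu) * real a + mu * real b) ^ 2"
    by (simp add: power2_eq_square algebra_simps)
  also have "\<dots> = 0" using c1 c2 by simp
  finally have "mu * (1 - mu) * (real a - real b) ^ 2 = 0" .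
  moreover have "(real a - real b) ^ 2 \<noteq> 0" using assms(1) by simp
  ultimately have "mu = 0 \<or> mu = 1" by simp
  then show False
  proof
    assume "mu = 0" then have "real v = real a" using c1 by simp
    then show False using assms by simp
  next
    assume "mu = 1" then have "real v = real b" using c1 by simp
    then show False using assms by simp
  qed
qed

lemma drawing_exists: "geometric_drawing {..<n} (complete_graph_edges n) (n * n)"
  unfolding geometric_drawing_def
proof (intro exI conjI)
  show "inj_on parab {..<n}"
  proof (rule inj_onI)
    fix i j assume "parab i = parab j"
    then have "(parab i)$1 = (parab j)$1" by simp
    then show "i = j" by (simp add: parab_def)
  qed
  have edge: "\<And>a b. {a, b} \<in> complete_graph_edges n \<Longrightarrow> a \<noteq> b \<and> a < n \<and> b < n"
    by (auto simp: complete_graph_edges_def doubleton_eq_iff)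
  show "\<forall>a b v. {a, b} \<in> complete_graph_edges n \<longrightarrow> v \<in> {..<n} \<longrightarrow> v \<noteq> a \<longrightarrow> v \<noteq> b \<longrightarrow>
           parab v \<notin> closed_segment (parab a) (parab b)"
    using edge parab_not_between by blast
  define col where "col e = Max e * n + Min e" for e :: "nat set"
  have colab: "col {a, b} = max a b * n + min a b" for a b by (simp add: col_def)
  show "\<forall>e\<in>complete_graph_edges n. col e < n * n"
  proof
    fix e assume "e \<in> complete_graph_edges n"
    then obtain a b where ab: "e = {a, b}" "a < n" "b < n" by (auto simp: complete_graph_edges_def)
    have "max a b * n + min a b \<le> (n - 1) * n + (n - 1)"
      using ab by (intro add_mono mult_right_mono) auto
    also have "\<dots> < n * n" using ab by (cases n) (auto simp: algebra_simps)
    finally show "col e < n * n" using ab colab by simp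
  qed
  show "\<forall>a b a' b'. {a, b} \<in> complete_graph_edges n \<longrightarrow> {a', b'} \<in> complete_graph_edges n \<longrightarrow>
           {a, b} \<noteq> {a', b'} \<longrightarrow> col {a, b} = col {a', b'} \<longrightarrow>
           closed_segment (parab a) (parab b) \<inter> closed_segment (parab a') (parab b') \<subseteq> parab ` ({a, b} \<inter> {a', b'})"
  proof (intro allI impI)
    fix a b a' b' assume h: "{a, b} \<in> complete_graph_edges n" "{a', b'} \<in> complete_graph_edges n"
      "{a, b} \<noteq> {a', b'}" "col {a, b} = col {a', b'}"
    have lt: "min a b < n" "min a' b' < n" using edge[OF h(1)] edge[OF h(2)] by auto
    have eq: "max a b * n + min a b = max a' b' * n + min a' b'" using h(4) colab by simp
    have "(max a b * n + min a b) mod n = min a b" using lt by simp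
    moreover have "(max a' b' * n + min a' b') mod n = min a' b'" using lt by simp
    ultimately have m1: "min a b = min a' b'" using eq by simp
    then have m2: "max a b = max a' b'" using eq lt by simp
    have "{a, b} = {min a b, max a b}" "{a', b'} = {min a' b', max a' b'}"
      by (auto simp: min_def max_def)
    then have False using h(3) m1 m2 by simp
    then show "closed_segment (parab a) (parab b) \<inter> closed_segment (parab a') (parab b') \<subseteq> parab ` ({a, b} \<inter> {a', b'})" by simp
  qed
qed

lemma thickness_drawing: "geometric_drawing {..<n} (complete_graph_edges n) (thickness_K n)"
  unfolding thickness_K_def geometric_thickness_def
  by (rule LeastI_ex) (use drawing_exists in blast)

lemma term_le_K_main:
  assumes n: "4 \<le> n" and x: "1 \<le> x" "2 * x + 1 \<le> n"
  shows "(real (n choose 2) - 2 * real (x choose 2) - 3) / (3 * real n - 2 * real x - 7) \<le> real (thickness_K n)"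
proof -
  have b: "int (n choose 2) - 2 * int (x choose 2) \<le> int (thickness_K n) * (3 * int n - 2 * int x - 7) + 3"
    by (rule drawing_bound[OF thickness_drawing x])
  have b': "real (n choose 2) - 2 * real (x choose 2) - 3 \<le> real (thickness_K n) * (3 * real n - 2 * real x - 7)"
  proof -
    have "real_of_int (int (n choose 2) - 2 * int (x choose 2)) \<le> real_of_int (int (thickness_K n) * (3 * int n - 2 * int x - 7) + 3)"
      using b by (simp only: of_int_le_iff)
    then show ?thesis by simp
  qed
  have d: "3 * real n - 2 * real x - 7 > 0" using n x by linarith
  show ?thesis using b' d by (simp add: divide_le_eq)
qed

lemma half_case_ineq:
  fixes r :: real
  assumes "2 \<le> r"
  shows "((2 * r) * (2 * r - 1) / 2 - r * (r - 1) - 3) / (3 * (2 * r) - 2 * r - 7)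
       \<le> ((2 * r) * (2 * r - 1) / 2 - (r - 1) * (r - 1 - 1) - 3) / (3 * (2 * r) - 2 * (r - 1) - 7)"
proof -
  have n1: "(2 * r) * (2 * r - 1) / 2 - r * (r - 1) - 3 = r * r - 3" by (simp add: field_simps)
  have n2: "(2 * r) * (2 * r - 1) / 2 - (r - 1) * (r - 1 - 1) - 3 = r * r + 2 * r - 5" by (simp add: field_simps)
  have d1: "3 * (2 * r) - 2 * r - 7 = 4 * r - 7" "3 * (2 * r) - 2 * (r - 1) - 7 = 4 * r - 5" by simp_all
  have p1: "4 * r - 7 > 0" "4 * r - 5 > 0" using assms by simp_all
  have "0 \<le> (r - 2) * (3 * r - 5)" using assms by simp
  moreover have "(r * r + 2 * r - 5) * (4 * r - 7) - (r * r - 3) * (4 * r - 5) = 2 * ((r - 2) * (3 * r - 5))"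
    by (simp add: algebra_simps)
  ultimately have key: "(r * r - 3) * (4 * r - 5) \<le> (r * r + 2 * r - 5) * (4 * r - 7)" by linarith
  have "(r * r - 3) / (4 * r - 7) \<le> (r * r + 2 * r - 5) / (4 * r - 5)"
    using key p1 by (simp add: divide_simps)
  then show ?thesis unfolding n1 n2 d1 .
qed

lemma term_le_K:
  assumes n: "4 \<le> n" and x: "1 \<le> x" "2 * x \<le> n"
  shows "(real (n choose 2) - 2 * real (x choose 2) - 3) / (3 * real n - 2 * real x - 7) \<le> real (thickness_K n)"
proof (cases "2 * x + 1 \<le> n")
  case True
  then show ?thesis using term_le_K_main[OF n x(1)] by simp
next
  case False
  then have nx: "n = 2 * x" using x by simp
  then have x2: "2 \<le> x" using n by simp
  have m: "(real (n choose 2) - 2 * real ((x - 1) choose 2) - 3) / (3 * real n - 2 * real (x - 1) - 7) \<le> real (thickness_K n)"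
    using term_le_K_main[OF n, of "x - 1"] x2 nx by simp
  have rx: "real (x - 1) = real x - 1" using x2 by simp
  have "(real (n choose 2) - 2 * real (x choose 2) - 3) / (3 * real n - 2 * real x - 7)
      \<le> (real (n choose 2) - 2 * real ((x - 1) choose 2) - 3) / (3 * real n - 2 * real (x - 1) - 7)"
    using half_case_ineq[of "real x"] x2 unfolding choose2_real nx rx by simp
  then show ?thesis using m by linarith
qed

lemma sqrt7_bounds: "2.644 < sqrt 7" "sqrt 7 < 2.64576"
proof -
  have "sqrt (2.644 ^ 2) < sqrt 7" by (rule real_sqrt_less_mono) (simp add: power2_eq_square)
  then show "2.644 < sqrt 7" by simp
  have "sqrt 7 < sqrt (2.64576 ^ 2)" by (rule real_sqrt_less_mono) (simp add: power2_eq_square)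
  then show "sqrt 7 < 2.64576" by simp
qed

lemma key_identity:
  fixes s nn dd c :: real
  assumes s2: "s * s = 7"
  defines "al \<equiv> (3 - s) / 2"
  shows "nn * (nn - 1) / 2 - (al * nn + dd) * (al * nn + dd - 1) - 3 - (al * nn + c) * (3 * nn - 2 * (al * nn + dd) - 7)
       = (23 / 2 - (4 + c) * s) * nn + (- dd * dd + (1 + 2 * c) * dd - 3 + 7 * c)"
proof -
  have a2: "al * al = 4 - 3 / 2 * s" using s2 by (simp add: al_def field_simps)
  have "nn * (nn - 1) / 2 - (al * nn + dd) * (al * nn + dd - 1) - 3 - (al * nn + c) * (3 * nn - 2 * (al * nn + dd) - 7)
      = nn * nn * (1 / 2 + al * al - 3 * al) + nn * (- 1 / 2 + 8 * al - 3 * c + 2 * c * al)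
        + (- dd * dd + dd - 3 + 2 * c * dd + 7 * c)"
    by (simp add: field_simps)
  also have "1 / 2 + al * al - 3 * al = 0" using a2 by (simp add: al_def field_simps)
  also have "- 1 / 2 + 8 * al - 3 * c + 2 * c * al = 23 / 2 - (4 + c) * s" by (simp add: al_def field_simps)
  finally show ?thesis by (simp add: algebra_simps)
qed

lemma part2_bound:
  assumes n: "12 \<le> n"
  shows "(3 - sqrt 7) / 2 * real n + 0.342 \<le> real (thickness_K n)"
proof -
  define s where "s = sqrt 7"
  have s2: "s * s = 7" by (simp add: s_def)
  have sb: "2.644 < s" "s < 2.64576" using sqrt7_bounds by (simp_all add: s_def)
  define al where "al = (3 - s) / 2"
  show ?thesis
  proof (cases "n = 12")
    case True
    have A: "(real (n choose 2) - 2 * real (3 choose 2) - 3) / (3 * real n - 2 * real (3::nat) - 7) \<le> real (thickness_K n)"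
      using term_le_K[of n 3] True by simp
    have B: "(real (n choose 2) - 2 * real (3 choose 2) - 3) / (3 * real n - 2 * real (3::nat) - 7) = 57 / 23"
      using True by (simp add: choose2_real)
    have "(3 - s) / 2 * 12 + 0.342 \<le> (57::real) / 23" using sb by (simp add: field_simps)
    then have C: "(3 - sqrt 7) / 2 * real n + 0.342 \<le> 57 / 23" using True by (simp add: s_def)
    show ?thesis using A B C by linarith
  next
    case False
    then have n13: "13 \<le> n" using n by simp
    define y where "y = al * real n + 1.342"
    have ypos: "y \<ge> 1.342" using sb by (simp add: y_def al_def)
    define x where "x = nat \<lfloor>y\<rfloor>"
    have rx: "real x = of_int \<lfloor>y\<rfloor>" using ypos by (simp add: x_def)
    have xle: "real x \<le> y" using rx by simp
    have xgt: "real x > y - 1" using rx by linarith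
    have x1: "1 \<le> x" using xgt ypos by simp
    have x2: "2 * x \<le> n"
    proof -
      have m: "(3 - s) * real n \<le> (89 / 250) * real n" using sb by (intro mult_right_mono) auto
      have a: "real x \<le> (3 - s) * real n / 2 + 671 / 500" using xle by (simp add: y_def al_def)
      have "real n \<ge> 13" using n13 by simp
      then have "2 * real x \<le> real n" using m a by linarith
      then show ?thesis by linarith
    qed
    define dd where "dd = real x - al * real n"
    have dd: "0.342 < dd" "dd \<le> 1.342" using xle xgt by (simp_all add: dd_def y_def)
    have rxe: "real x = al * real n + dd" by (simp add: dd_def)
    have den: "3 * real n - 2 * real x - 7 > 0" using x2 n13 by linarith
    have qd: "- dd * dd + (1 + 2 * 0.342) * dd - 3 + 7 * 0.342 \<ge> - 0.147036"
    proof -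
      have h: "0 \<le> (dd - 0.342) * (1.342 - dd)" using dd by simp
      have "- dd * dd + (1 + 2 * 0.342) * dd - 3 + 7 * 0.342 = (dd - 0.342) * (1.342 - dd) - (0.147036::real)"
        by (simp add: field_simps)
      then show ?thesis using h by linarith
    qed
    have kap: "(23 / 2 - (4 + 0.342) * s) * real n \<ge> 0.147036"
    proof -
      have "23 / 2 - (4 + 0.342) * s \<ge> 0.0115" using sb by simp
      then have "(23 / 2 - (4 + 0.342) * s) * real n \<ge> 0.0115 * 13"
        using n13 by (intro mult_mono) auto
      then show ?thesis by simp
    qed
    have num: "real n * (real n - 1) / 2 - real x * (real x - 1) - 3 - (al * real n + 0.342) * (3 * real n - 2 * real x - 7) \<ge> 0"
      unfolding rxe using key_identity[OF s2, of "real n" dd "0.342"] qd kap by (simp add: al_def)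
    have numeq: "real (n choose 2) - 2 * real (x choose 2) - 3 = real n * (real n - 1) / 2 - real x * (real x - 1) - 3"
      by (simp add: choose2_real)
    have "(al * real n + 0.342) * (3 * real n - 2 * real x - 7) \<le> real (n choose 2) - 2 * real (x choose 2) - 3"
      using num unfolding numeq by linarith
    then have "al * real n + 0.342 \<le> (real (n choose 2) - 2 * real (x choose 2) - 3) / (3 * real n - 2 * real x - 7)"
      using den by (simp add: pos_le_divide_eq)
    also have "\<dots> \<le> real (thickness_K n)" using term_le_K[OF _ x1 x2] n by simp
    finally show ?thesis by (simp add: al_def s_def)
  qed
qed

theorem theorem3p1:
  shows "(\<forall>n::nat. n \<ge> 4 \<longrightarrow>
           real (thickness_K n) \<ge>
             Max ((\<lambda>x::nat. (real (n choose 2) - 2 * real (x choose 2) - 3)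
                             / (3 * real n - 2 * real x - 7)) ` {x. 1 \<le> x \<and> real x \<le> real n / 2}))
       \<and> (\<forall>n::nat. n \<ge> 12 \<longrightarrow>
           int (thickness_K n) \<ge> \<lceil>(3 - sqrt 7) / 2 * real n + 0.342\<rceil> \<and>
           \<lceil>(3 - sqrt 7) / 2 * real n + 0.342\<rceil> \<ge> \<lceil>real n / 5.646 + 0.342\<rceil>)"
proof (intro conjI allI impI)
  fix n :: nat assume n: "n \<ge> 4"
  define A where "A = {x::nat. 1 \<le> x \<and> real x \<le> real n / 2}"
  have finA: "finite A" by (rule finite_subset[of _ "{..n}"]) (auto simp: A_def)
  have neA: "1 \<in> A" using n by (simp add: A_def)
  have "\<forall>a\<in>(\<lambda>x::nat. (real (n choose 2) - 2 * real (x choose 2) - 3) / (3 * real n - 2 * real x - 7)) ` A.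
          a \<le> real (thickness_K n)"
  proof
    fix a assume "a \<in> (\<lambda>x::nat. (real (n choose 2) - 2 * real (x choose 2) - 3) / (3 * real n - 2 * real x - 7)) ` A"
    then obtain x where x: "x \<in> A" "a = (real (n choose 2) - 2 * real (x choose 2) - 3) / (3 * real n - 2 * real x - 7)"
      by blast
    have "1 \<le> x" "2 * x \<le> n" using x(1) by (auto simp: A_def)
    then show "a \<le> real (thickness_K n)" using term_le_K[OF n] x(2) by simp
  qed
  then show "Max ((\<lambda>x::nat. (real (n choose 2) - 2 * real (x choose 2) - 3) / (3 * real n - 2 * real x - 7))
              ` {x. 1 \<le> x \<and> real x \<le> real n / 2}) \<le> real (thickness_K n)"
    using finA neA unfolding A_def[symmetric] by (subst Max_le_iff) auto
next
  fix n :: nat assume n: "n \<ge> 12"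
  show "\<lceil>(3 - sqrt 7) / 2 * real n + 0.342\<rceil> \<le> int (thickness_K n)"
    using part2_bound[OF n] by (simp add: ceiling_le_iff)
  have sb: "sqrt 7 < 2.64576" using sqrt7_bounds by simp
  have c: "1 / 5.646 \<le> (3 - sqrt 7) / 2" using sb by (simp add: field_simps)
  have "real n * (1 / 5.646) \<le> real n * ((3 - sqrt 7) / 2)" using c by (intro mult_left_mono) auto
  then have "real n / 5.646 + 0.342 \<le> (3 - sqrt 7) / 2 * real n + 0.342" by (simp add: algebra_simps)
  then show "\<lceil>real n / 5.646 + 0.342\<rceil> \<le> \<lceil>(3 - sqrt 7) / 2 * real n + 0.342\<rceil>" by (rule ceiling_mono)
qed

end
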